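(* Let $E$ be a separable real Hilbert space with $\dim E\geq 2$ and let $1<p<\infty$. For a measure $\mu\in\mathcal{W}_p(E)$ the following are equivalent: (i) $\mu$ is a Dirac measure; (ii) every geodesic segment $\gamma\colon[0,T]\to\mathcal{W}_p(E)$ ($T>0$) with $\gamma(0)=\mu$ can be extended to a geodesic ray $\widetilde\gamma\colon[0,\infty)\to\mathcal{W}_p(E)$ (i.e. $\widetilde\gamma|_{[0,T]}=\gamma$).
   Context: For a complete separable metric space $(X,\rho)$ and $0<p<\infty$, $\mathcal{W}_p(X)$ is the set of Borel probability measures $\mu$ on $X$ with $\int_X\rho(x,\hat x)^p\,d\mu(x)<\infty$ for some (hence all) $\hat x\in X$, equipped with the $p$-Wasserstein distance $d_{\mathcal{W}_p}(\mu,\nu)=\big(\inf_{\pi\in\Pi(\mu,\nu)}\int_{X\times X}\rho(x,y)^p\,d\pi(x,y)\big)^{\min\{1/p,1\}}$, where $\Pi(\mu,\nu)$ is the set of Borel probability measures on $X\times X$ with marginals $\mu$ and $\nu$. On a Hilbert space $E$ the metric is $\rho(x,y)=\|x-y\|$. A geodesic is a map $\gamma\colon I\to\mathcal{W}_p(E)$, $I\subseteq\mathbb{R}$ a closed interval, with $d_{\mathcal{W}_p}(\gamma(s),\gamma(t))=|s-t|$ for all $s,t\in I$; it is a geodesic segment if $I=[0,T]$ for some $T>0$ and a geodesic ray if $I=[0,\infty)$. *)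

theory Defs
  imports "HOL-Probability.Probability"
begin

text \<open>Borel probability measures on a metric space X with finite p-th moment
  (moment taken about the base point 0; for a normed space this is equivalent
  to "for some / all base points").\<close>
definition wasserstein_space :: "real \<Rightarrow> ('a::real_normed_vector) measure set" where
  "wasserstein_space p =
     {\<mu>. prob_space \<mu> \<and> sets \<mu> = sets borel \<and>
          (\<integral>\<^sup>+ x. ennreal (norm x powr p) \<partial>\<mu>) < \<infinity>}"

definition couplings :: "'a::topological_space measure \<Rightarrow> 'a measure \<Rightarrow> ('a \<times> 'a) measure set" where
  "couplings \<mu> \<nu> =
     {\<pi>. prob_space \<pi> \<and> sets \<pi> = sets (borel :: ('a \<times> 'a) measure) \<and>
          distr \<pi> borel fst = \<mu> \<and> distr \<pi> borel snd = \<nu>}"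

definition wasserstein_dist :: "real \<Rightarrow> 'a::metric_space measure \<Rightarrow> 'a measure \<Rightarrow> real" where
  "wasserstein_dist p \<mu> \<nu> =
     enn2real (INF \<pi>\<in>couplings \<mu> \<nu>. \<integral>\<^sup>+ z. ennreal (dist (fst z) (snd z) powr p) \<partial>\<pi>)
       powr (min (1 / p) 1)"

definition wgeodesic :: "real \<Rightarrow> real set \<Rightarrow> (real \<Rightarrow> ('a::real_normed_vector) measure) \<Rightarrow> bool" where
  "wgeodesic p I \<gamma> \<longleftrightarrow>
     (\<forall>t\<in>I. \<gamma> t \<in> wasserstein_space p) \<and>
     (\<forall>s\<in>I. \<forall>t\<in>I. wasserstein_dist p (\<gamma> s) (\<gamma> t) = \<bar>s - t\<bar>)"

end

theory Submission
  imports Defs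
begin


lemma powr_ge1_neg: "0 < (l::real) \<Longrightarrow> l \<le> 1 \<Longrightarrow> q \<le> 0 \<Longrightarrow> 1 \<le> l powr q"
  using powr_mono'[of q 0 l] by simp

lemma conv_ineq:
  fixes u v l p :: real
  assumes u: "u \<ge> 0" and v: "v \<ge> 0" and l: "0 < l" "l < 1" and p: "p \<ge> 1"
  shows "(u+v) powr p \<le> l powr (1-p) * u powr p + (1-l) powr (1-p) * v powr p"
proof -
  have a: "l powr (1-p) \<ge> 1" "(1-l) powr (1-p) \<ge> 1" using l p by (auto intro!: powr_ge1_neg)
  show ?thesis
  proof (cases "u = 0 \<or> v = 0")
    case True
    then show ?thesis
    proof
      assume "u = 0"
      then show ?thesis using a v by (simp add: mult_le_cancel_right1)
    next
      assume "v = 0"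
      then show ?thesis using a u by (simp add: mult_le_cancel_right1)
    qed
  next
    case False
    then have up: "u > 0" "v > 0" using u v by auto
    have c: "convex_on {0<..} (\<lambda>x::real. x powr p)" using powr_convex p by blast
    have "((1 - (1-l)) *\<^sub>R (u/l) + (1-l) *\<^sub>R (v/(1-l))) powr p \<le> (1-(1-l)) * (u/l) powr p + (1-l) * (v/(1-l)) powr p"
      using convex_onD[OF c, of "1-l" "u/l" "v/(1-l)"] l up by simp
    also have "(1 - (1-l)) *\<^sub>R (u/l) + (1-l) *\<^sub>R (v/(1-l)) = u + v" using l by simp
    also have "(1-(1-l)) * (u/l) powr p = l powr (1-p) * u powr p"
      using l up by (simp add: powr_divide powr_diff field_simps)
    also have "(1-l) * (v/(1-l)) powr p = (1-l) powr (1-p) * v powr p"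
      using l up by (simp add: powr_divide powr_diff field_simps)
    finally show ?thesis .
  qed
qed

lemma conv_half:
  fixes u v p :: real
  assumes "u \<ge> 0" "v \<ge> 0" "p \<ge> 1"
  shows "(u+v) powr p \<le> 2 powr (p-1) * (u powr p + v powr p)"
proof -
  have "(1/2::real) powr (1-p) = 2 powr (p-1)"
    by (simp add: powr_divide powr_minus_divide[symmetric] powr_diff)
  then show ?thesis using conv_ineq[of u v "1/2" p] assms by (simp add: algebra_simps)
qed



lemma powr_id_aux1:
  fixes A B p :: real assumes "A > 0" "B > 0"
  shows "(A/(A+B)) powr (1-p) * A powr p = A * (A+B) powr (p-1)"
proof -
  have e1: "(A+B) powr (p-1) = inverse ((A+B) powr (1-p))" using powr_minus[of "A+B" "1-p"] by simp
  have e2: "A powr (1-p) * A powr p = A" using assms by (simp add: powr_add[symmetric])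
  have "(A/(A+B)) powr (1-p) * A powr p = (A powr (1-p) * A powr p) / (A+B) powr (1-p)"
    using assms by (simp add: powr_divide)
  also have "\<dots> = A * (A+B) powr (p-1)" by (simp add: e1 e2 divide_inverse)
  finally show ?thesis .
qed

lemma powr_id_aux:
  fixes A B p :: real assumes "A > 0" "B > 0"
  shows "(A/(A+B)) powr (1-p) * A powr p + (1 - A/(A+B)) powr (1-p) * B powr p = (A+B) powr p"
proof -
  have e: "1 - A/(A+B) = B/(A+B)" using assms by (simp add: field_simps)
  have "(B/(B+A)) powr (1-p) * B powr p = B * (B+A) powr (p-1)" using powr_id_aux1[of B A p] assms by simp
  then have "(B/(A+B)) powr (1-p) * B powr p = B * (A+B) powr (p-1)" by (simp add: add.commute)
  moreover have "A * (A+B) powr (p-1) + B * (A+B) powr (p-1) = (A+B) powr p"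
  proof -
    have "A * (A+B) powr (p-1) + B * (A+B) powr (p-1) = (A+B) * (A+B) powr (p-1)" by (simp add: algebra_simps)
    also have "\<dots> = (A+B) powr p" using powr_mult_base[of "A+B" "p-1"] assms by simp
    finally show ?thesis .
  qed
  ultimately show ?thesis using e powr_id_aux1[OF assms, of p] by simp
qed

lemma AE_zero_of_int0:
  fixes f :: "'b \<Rightarrow> real"
  assumes p: "0 < p" and fm: "f \<in> borel_measurable M" and f0: "\<And>x. f x \<ge> 0"
   and fA: "(\<integral>\<^sup>+x. ennreal (f x powr p) \<partial>M) = 0"
  shows "AE x in M. f x = 0"
proof -
  have "AE x in M. ennreal (f x powr p) = 0"
    using fA by (subst (asm) nn_integral_0_iff_AE) (use fm in auto)
  then show ?thesis by eventually_elim (use f0 p in auto)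
qed

lemma minkowski_nn:
  fixes f g :: "'b \<Rightarrow> real"
  assumes p: "1 \<le> p" and fm: "f \<in> borel_measurable M" and gm: "g \<in> borel_measurable M"
   and f0: "\<And>x. f x \<ge> 0" and g0: "\<And>x. g x \<ge> 0" and A: "A \<ge> 0" and B: "B \<ge> 0"
   and fA: "(\<integral>\<^sup>+x. ennreal (f x powr p) \<partial>M) = ennreal (A powr p)"
   and gB: "(\<integral>\<^sup>+x. ennreal (g x powr p) \<partial>M) = ennreal (B powr p)"
  shows "(\<integral>\<^sup>+x. ennreal ((f x + g x) powr p) \<partial>M) \<le> ennreal ((A+B) powr p)"
proof (cases "A = 0 \<or> B = 0")
  case True
  then show ?thesis
  proof
    assume A0: "A = 0"
    then have "AE x in M. f x = 0" using AE_zero_of_int0[of p f M] fm f0 fA p by simp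
    then have "(\<integral>\<^sup>+x. ennreal ((f x + g x) powr p) \<partial>M) = (\<integral>\<^sup>+x. ennreal (g x powr p) \<partial>M)"
      by (intro nn_integral_cong_AE) auto
    then show ?thesis using gB A0 by simp
  next
    assume B0: "B = 0"
    then have "AE x in M. g x = 0" using AE_zero_of_int0[of p g M] gm g0 gB p by simp
    then have "(\<integral>\<^sup>+x. ennreal ((f x + g x) powr p) \<partial>M) = (\<integral>\<^sup>+x. ennreal (f x powr p) \<partial>M)"
      by (intro nn_integral_cong_AE) auto
    then show ?thesis using fA B0 by simp
  qed
next
  case False
  then have AB: "A > 0" "B > 0" using A B by auto
  define l where "l = A/(A+B)"
  have l: "0 < l" "l < 1" using AB by (auto simp: l_def field_simps)
  have "(\<integral>\<^sup>+x. ennreal ((f x + g x) powr p) \<partial>M)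
      \<le> (\<integral>\<^sup>+x. ennreal (l powr (1-p)) * ennreal (f x powr p) + ennreal ((1-l) powr (1-p)) * ennreal (g x powr p) \<partial>M)"
    using conv_ineq[OF f0 g0 l p]
    by (intro nn_integral_mono) (simp add: ennreal_mult[symmetric] ennreal_plus[symmetric] del: ennreal_plus)
  also have "\<dots> = ennreal (l powr (1-p)) * (\<integral>\<^sup>+x. ennreal (f x powr p) \<partial>M) + ennreal ((1-l) powr (1-p)) * (\<integral>\<^sup>+x. ennreal (g x powr p) \<partial>M)"
    using fm gm by (simp add: nn_integral_add nn_integral_cmult)
  also have "\<dots> = ennreal (l powr (1-p) * A powr p + (1-l) powr (1-p) * B powr p)"
    by (simp add: fA gB ennreal_mult[symmetric] ennreal_plus[symmetric] del: ennreal_plus)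
  also have "\<dots> = ennreal ((A+B) powr p)" using powr_id_aux[OF AB, of p] by (simp add: l_def)
  finally show ?thesis .
qed



definition cost :: "real \<Rightarrow> ('a::metric_space \<times> 'a) measure \<Rightarrow> ennreal" where
  "cost p \<pi> = (\<integral>\<^sup>+ z. ennreal (dist (fst z) (snd z) powr p) \<partial>\<pi>)"

lemma W_def': "wasserstein_dist p \<mu> \<nu> = enn2real (INF \<pi>\<in>couplings \<mu> \<nu>. cost p \<pi>) powr (min (1/p) 1)"
  unfolding wasserstein_dist_def cost_def ..

lemma W_eq:
  assumes p: "p > 1" and I: "(INF \<pi>\<in>couplings \<mu> \<nu>. cost p \<pi>) = ennreal (c powr p)" and c: "c \<ge> 0"
  shows "wasserstein_dist p \<mu> \<nu> = c"
proof -
  have m: "min (1/p) 1 = 1/p" using p by simp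
  show ?thesis unfolding W_def' I m using p c by (simp add: powr_powr)
qed

lemma W_to_INF:
  assumes p: "p > 1" and fin: "(INF \<pi>\<in>couplings \<mu> \<nu>. cost p \<pi>) < \<infinity>" and W: "wasserstein_dist p \<mu> \<nu> = c"
  shows "(INF \<pi>\<in>couplings \<mu> \<nu>. cost p \<pi>) = ennreal (c powr p)"
proof -
  define r where "r = enn2real (INF \<pi>\<in>couplings \<mu> \<nu>. cost p \<pi>)"
  have r0: "r \<ge> 0" by (simp add: r_def)
  have e: "(INF \<pi>\<in>couplings \<mu> \<nu>. cost p \<pi>) = ennreal r" unfolding r_def using fin by (subst ennreal_enn2real) auto
  have m: "min (1/p) 1 = 1/p" using p by simp
  have "c = r powr (1/p)" using W unfolding W_def' m r_def[symmetric] by simp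
  then have "c powr p = r" using p r0 by (simp add: powr_powr)
  then show ?thesis using e by simp
qed

lemma fst_borel: "(fst :: 'a::second_countable_topology \<times> 'b::second_countable_topology \<Rightarrow> 'a) \<in> borel_measurable borel"
  unfolding borel_prod[symmetric] by simp
lemma snd_borel: "(snd :: 'a::second_countable_topology \<times> 'b::second_countable_topology \<Rightarrow> 'b) \<in> borel_measurable borel"
  unfolding borel_prod[symmetric] by simp

lemma dist_borel: "(\<lambda>z::'b::{metric_space,second_countable_topology}\<times>'b. ennreal (dist (fst z) (snd z) powr p)) \<in> borel_measurable borel"
  unfolding borel_prod[symmetric] by measurable

lemma meas_pair_map:
  fixes f g :: "'a::second_countable_topology \<Rightarrow> 'b::second_countable_topology"
  assumes "f \<in> borel_measurable borel" "g \<in> borel_measurable borel"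
  shows "(\<lambda>z::'a\<times>'a. (f (fst z), g (snd z))) \<in> borel_measurable borel"
  using assms unfolding borel_prod[symmetric] by measurable

lemma couplings_map:
  fixes f g :: "'a::second_countable_topology \<Rightarrow> 'b::second_countable_topology"
  assumes \<pi>: "\<pi> \<in> couplings \<mu> \<nu>" and f: "f \<in> borel_measurable borel" and g: "g \<in> borel_measurable borel"
  shows "distr \<pi> borel (\<lambda>z. (f (fst z), g (snd z))) \<in> couplings (distr \<mu> borel f) (distr \<nu> borel g)"
proof -
  have ps: "prob_space \<pi>" and sp: "sets \<pi> = sets borel" and m1: "distr \<pi> borel fst = \<mu>" and m2: "distr \<pi> borel snd = \<nu>"
    using \<pi> by (auto simp: couplings_def)
  have h: "(\<lambda>z. (f (fst z), g (snd z))) \<in> measurable \<pi> borel"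
    using meas_pair_map[OF f g] sp by (simp cong: measurable_cong_sets)
  have fstm: "fst \<in> measurable (borel::('a\<times>'a) measure) borel" "snd \<in> measurable (borel::('a\<times>'a) measure) borel"
    by (auto intro: fst_borel snd_borel)
  have fstm2: "fst \<in> measurable (borel::('b\<times>'b) measure) borel" "snd \<in> measurable (borel::('b\<times>'b) measure) borel"
    by (auto intro: fst_borel snd_borel)
  have fm: "fst \<in> measurable \<pi> borel" "snd \<in> measurable \<pi> borel" using fstm sp by (simp_all cong: measurable_cong_sets)
  have "distr (distr \<pi> borel (\<lambda>z. (f (fst z), g (snd z)))) borel fst = distr \<pi> borel (f \<circ> fst)"
    by (subst distr_distr[OF fstm2(1) h]) (simp add: comp_def)
  also have "\<dots> = distr (distr \<pi> borel fst) borel f" by (subst distr_distr[OF f fm(1)]) simp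
  finally have 1: "distr (distr \<pi> borel (\<lambda>z. (f (fst z), g (snd z)))) borel fst = distr \<mu> borel f" using m1 by simp
  have "distr (distr \<pi> borel (\<lambda>z. (f (fst z), g (snd z)))) borel snd = distr \<pi> borel (g \<circ> snd)"
    by (subst distr_distr[OF fstm2(2) h]) (simp add: comp_def)
  also have "\<dots> = distr (distr \<pi> borel snd) borel g" by (subst distr_distr[OF g fm(2)]) simp
  finally have 2: "distr (distr \<pi> borel (\<lambda>z. (f (fst z), g (snd z)))) borel snd = distr \<nu> borel g" using m2 by simp
  show ?thesis unfolding couplings_def using 1 2 prob_space.prob_space_distr[OF ps h] by simp
qed

lemma cost_map:
  fixes f g :: "'a::second_countable_topology \<Rightarrow> 'b::{metric_space, second_countable_topology}"
  assumes sp: "sets \<pi> = sets borel" and f: "f \<in> borel_measurable borel" and g: "g \<in> borel_measurable borel"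
  shows "cost p (distr \<pi> borel (\<lambda>z. (f (fst z), g (snd z)))) = (\<integral>\<^sup>+ z. ennreal (dist (f (fst z)) (g (snd z)) powr p) \<partial>\<pi>)"
proof -
  have h: "(\<lambda>z. (f (fst z), g (snd z))) \<in> measurable \<pi> borel"
    using meas_pair_map[OF f g] sp by (simp cong: measurable_cong_sets)
  note d = dist_borel[of p]
  show ?thesis unfolding cost_def by (subst nn_integral_distr[OF h]) (use d in simp_all)
qed



lemma swap_borel: "(\<lambda>z::'a::second_countable_topology\<times>'b::second_countable_topology. (snd z, fst z)) \<in> borel_measurable borel"
  unfolding borel_prod[symmetric] by measurable

lemma couplings_swap:
  fixes \<mu> \<nu> :: "'a::{metric_space,second_countable_topology} measure"
  assumes \<pi>: "\<pi> \<in> couplings \<mu> \<nu>"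
  shows "distr \<pi> borel (\<lambda>z. (snd z, fst z)) \<in> couplings \<nu> \<mu>"
    "cost p (distr \<pi> borel (\<lambda>z. (snd z, fst z))) = cost p \<pi>"
proof -
  have ps: "prob_space \<pi>" and sp: "sets \<pi> = sets borel" and m1: "distr \<pi> borel fst = \<mu>" and m2: "distr \<pi> borel snd = \<nu>"
    using \<pi> by (auto simp: couplings_def)
  have h: "(\<lambda>z. (snd z, fst z)) \<in> measurable \<pi> borel"
    using swap_borel sp by (simp cong: measurable_cong_sets)
  have fm: "fst \<in> measurable \<pi> borel" "snd \<in> measurable \<pi> borel" using fst_borel snd_borel sp by (simp_all cong: measurable_cong_sets)
  have 1: "distr (distr \<pi> borel (\<lambda>z. (snd z, fst z))) borel fst = \<nu>"
    by (subst distr_distr[OF fst_borel h]) (simp add: comp_def m2)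
  have 2: "distr (distr \<pi> borel (\<lambda>z. (snd z, fst z))) borel snd = \<mu>"
    by (subst distr_distr[OF snd_borel h]) (simp add: comp_def m1)
  show "distr \<pi> borel (\<lambda>z. (snd z, fst z)) \<in> couplings \<nu> \<mu>"
    unfolding couplings_def using 1 2 prob_space.prob_space_distr[OF ps h] by simp
  show "cost p (distr \<pi> borel (\<lambda>z. (snd z, fst z))) = cost p \<pi>"
    unfolding cost_def
    by (subst nn_integral_distr[OF h]) (use dist_borel[of p] in \<open>simp_all add: dist_commute\<close>)
qed

lemma INF_swap_le:
  fixes \<mu> \<nu> :: "'a::{metric_space,second_countable_topology} measure"
  shows "(INF \<pi>\<in>couplings \<nu> \<mu>. cost p \<pi>) \<le> (INF \<pi>\<in>couplings \<mu> \<nu>. cost p \<pi>)"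
proof (rule INF_greatest)
  fix \<pi> assume a: "\<pi> \<in> couplings \<mu> \<nu>"
  have "(INF \<pi>\<in>couplings \<nu> \<mu>. cost p \<pi>) \<le> cost p (distr \<pi> borel (\<lambda>z. (snd z, fst z)))"
    by (rule INF_lower) (rule couplings_swap(1)[OF a])
  also have "\<dots> = cost p \<pi>" by (rule couplings_swap(2)[OF a])
  finally show "(INF \<pi>\<in>couplings \<nu> \<mu>. cost p \<pi>) \<le> cost p \<pi>" .
qed

lemma INF_swap:
  fixes \<mu> \<nu> :: "'a::{metric_space,second_countable_topology} measure"
  shows "(INF \<pi>\<in>couplings \<nu> \<mu>. cost p \<pi>) = (INF \<pi>\<in>couplings \<mu> \<nu>. cost p \<pi>)"
  by (rule antisym) (rule INF_swap_le, rule INF_swap_le)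

lemma W_sym:
  fixes \<mu> \<nu> :: "'a::{metric_space,second_countable_topology} measure"
  shows "wasserstein_dist p \<nu> \<mu> = wasserstein_dist p \<mu> \<nu>"
  unfolding W_def' INF_swap ..

lemma couplings_dirac_ex:
  fixes \<nu> :: "'a::{metric_space,second_countable_topology} measure"
  assumes ps: "prob_space \<nu>" and sp: "sets \<nu> = sets borel"
  shows "distr \<nu> borel (\<lambda>y. (x,y)) \<in> couplings (return borel x) \<nu>"
proof -
  have "(\<lambda>y::'a. (x,y)) \<in> measurable borel (borel \<Otimes>\<^sub>M borel)" by measurable
  then have hb: "(\<lambda>y::'a. (x,y)) \<in> measurable borel borel" by (simp add: borel_prod)
  have h: "(\<lambda>y::'a. (x,y)) \<in> measurable \<nu> borel"
    using sp hb by (simp cong: measurable_cong_sets)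
  have 1: "distr (distr \<nu> borel (\<lambda>y. (x,y))) borel fst = return borel x"
    by (subst distr_distr[OF fst_borel h]) (simp add: comp_def prob_space.distr_const[OF ps])
  have 2: "distr (distr \<nu> borel (\<lambda>y. (x,y))) borel snd = \<nu>"
    by (subst distr_distr[OF snd_borel h]) (simp add: comp_def distr_id2 sp)
  show ?thesis unfolding couplings_def using 1 2 prob_space.prob_space_distr[OF ps h] by simp
qed

lemma cost_dirac:
  fixes \<nu> :: "'a::{metric_space,second_countable_topology} measure"
  assumes \<pi>: "\<pi> \<in> couplings (return borel x) \<nu>"
  shows "cost p \<pi> = (\<integral>\<^sup>+ y. ennreal (dist x y powr p) \<partial>\<nu>)"
proof -
  have ps: "prob_space \<pi>" and sp: "sets \<pi> = sets borel" and m1: "distr \<pi> borel fst = return borel x" and m2: "distr \<pi> borel snd = \<nu>"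
    using \<pi> by (auto simp: couplings_def)
  have fm: "fst \<in> measurable \<pi> borel" "snd \<in> measurable \<pi> borel" using fst_borel snd_borel sp by (simp_all cong: measurable_cong_sets)
  have "emeasure \<pi> (fst -` {x} \<inter> space \<pi>) = emeasure (distr \<pi> borel fst) {x}"
    by (subst emeasure_distr[OF fm(1)]) auto
  also have "\<dots> = 1" using m1 by simp
  finally have "measure \<pi> (fst -` {x} \<inter> space \<pi>) = 1" by (simp add: measure_def)
  then have ae: "AE z in \<pi>. fst z = x"
    using prob_space.AE_prob_1[OF ps] by fastforce
  have "cost p \<pi> = (\<integral>\<^sup>+ z. ennreal (dist x (snd z) powr p) \<partial>\<pi>)"
    unfolding cost_def by (intro nn_integral_cong_AE) (use ae in auto)
  also have "\<dots> = (\<integral>\<^sup>+ y. ennreal (dist x y powr p) \<partial>(distr \<pi> borel snd))"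
    by (subst nn_integral_distr[OF fm(2)]) auto
  finally show ?thesis using m2 by simp
qed

lemma INF_dirac:
  fixes \<nu> :: "'a::{metric_space,second_countable_topology} measure"
  assumes ps: "prob_space \<nu>" and sp: "sets \<nu> = sets borel"
  shows "(INF \<pi>\<in>couplings (return borel x) \<nu>. cost p \<pi>) = (\<integral>\<^sup>+ y. ennreal (dist x y powr p) \<partial>\<nu>)"
proof -
  have ne: "couplings (return borel x) \<nu> \<noteq> {}" using couplings_dirac_ex[OF ps sp] by blast
  have "(INF \<pi>\<in>couplings (return borel x) \<nu>. cost p \<pi>) = (INF \<pi>\<in>couplings (return borel x) \<nu>. (\<integral>\<^sup>+ y. ennreal (dist x y powr p) \<partial>\<nu>))"
    using cost_dirac by (intro INF_cong) auto
  then show ?thesis using ne by simp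
qed


lemma couplings_prod:
  fixes \<mu> \<nu> :: "'a::{metric_space,second_countable_topology} measure"
  assumes p1: "prob_space \<mu>" and s1: "sets \<mu> = sets borel" and p2: "prob_space \<nu>" and s2: "sets \<nu> = sets borel"
  shows "\<mu> \<Otimes>\<^sub>M \<nu> \<in> couplings \<mu> \<nu>"
proof -
  interpret P: pair_prob_space \<mu> \<nu>
    using p1 p2 by (simp add: pair_prob_space_def pair_sigma_finite_def prob_space_imp_sigma_finite)
  have sp: "sets (\<mu> \<Otimes>\<^sub>M \<nu>) = sets (borel::('a\<times>'a) measure)"
    using s1 s2 by (simp add: borel_prod[symmetric] cong: sets_pair_measure_cong)
  have "fst \<in> measurable (\<mu> \<Otimes>\<^sub>M \<nu>) \<mu>" by simp
  then have f1: "fst \<in> measurable (\<mu> \<Otimes>\<^sub>M \<nu>) borel" unfolding measurable_cong_sets[OF refl s1] .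
  have "snd \<in> measurable (\<mu> \<Otimes>\<^sub>M \<nu>) \<nu>" by simp
  then have f2: "snd \<in> measurable (\<mu> \<Otimes>\<^sub>M \<nu>) borel" unfolding measurable_cong_sets[OF refl s2] .
  have 1: "distr (\<mu> \<Otimes>\<^sub>M \<nu>) borel fst = \<mu>"
  proof (rule measure_eqI)
    fix A assume A: "A \<in> sets (distr (\<mu> \<Otimes>\<^sub>M \<nu>) borel fst)"
    then have Ab: "A \<in> sets \<mu>" using s1 by simp
    have "emeasure (distr (\<mu> \<Otimes>\<^sub>M \<nu>) borel fst) A = emeasure (\<mu> \<Otimes>\<^sub>M \<nu>) (fst -` A \<inter> space (\<mu> \<Otimes>\<^sub>M \<nu>))"
      using A by (intro emeasure_distr[OF f1]) simp
    also have "fst -` A \<inter> space (\<mu> \<Otimes>\<^sub>M \<nu>) = A \<times> space \<nu>"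
      using sets.sets_into_space[OF Ab] by (auto simp: space_pair_measure)
    finally have "emeasure (distr (\<mu> \<Otimes>\<^sub>M \<nu>) borel fst) A = emeasure (\<mu> \<Otimes>\<^sub>M \<nu>) (A \<times> space \<nu>)" .
    also have "\<dots> = emeasure \<mu> A" using Ab by (subst P.M2.emeasure_pair_measure_Times) (simp_all add: P.M2.emeasure_space_1)
    finally show "emeasure (distr (\<mu> \<Otimes>\<^sub>M \<nu>) borel fst) A = emeasure \<mu> A" .
  qed (use s1 in simp)
  have 2: "distr (\<mu> \<Otimes>\<^sub>M \<nu>) borel snd = \<nu>"
  proof (rule measure_eqI)
    fix A assume A: "A \<in> sets (distr (\<mu> \<Otimes>\<^sub>M \<nu>) borel snd)"
    then have Ab: "A \<in> sets \<nu>" using s2 by simp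
    have "emeasure (distr (\<mu> \<Otimes>\<^sub>M \<nu>) borel snd) A = emeasure (\<mu> \<Otimes>\<^sub>M \<nu>) (snd -` A \<inter> space (\<mu> \<Otimes>\<^sub>M \<nu>))"
      using A by (intro emeasure_distr[OF f2]) simp
    also have "snd -` A \<inter> space (\<mu> \<Otimes>\<^sub>M \<nu>) = space \<mu> \<times> A"
      using sets.sets_into_space[OF Ab] by (auto simp: space_pair_measure)
    finally have "emeasure (distr (\<mu> \<Otimes>\<^sub>M \<nu>) borel snd) A = emeasure (\<mu> \<Otimes>\<^sub>M \<nu>) (space \<mu> \<times> A)" .
    also have "\<dots> = emeasure \<nu> A" using Ab by (subst P.M2.emeasure_pair_measure_Times) (simp_all add: P.M1.emeasure_space_1)
    finally show "emeasure (distr (\<mu> \<Otimes>\<^sub>M \<nu>) borel snd) A = emeasure \<nu> A" .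
  qed (use s2 in simp)
  show ?thesis unfolding couplings_def using 1 2 sp P.prob_space_axioms by simp
qed




lemma meas_on_pair:
  fixes h :: "'a::second_countable_topology \<times> 'b::second_countable_topology \<Rightarrow> 'c::topological_space"
  assumes "sets \<pi> = sets (borel :: ('a\<times>'b) measure)" "h \<in> borel_measurable (borel \<Otimes>\<^sub>M borel)"
  shows "h \<in> borel_measurable \<pi>"
  using assms(2) unfolding borel_prod measurable_cong_sets[OF assms(1) refl] .

lemma mom_shift:
  fixes \<rho> :: "'a::{metric_space,second_countable_topology} measure"
  assumes ps: "prob_space \<rho>" and sp: "sets \<rho> = sets borel" and p: "p \<ge> 1"
    and fin: "(\<integral>\<^sup>+ y. ennreal (dist x y powr p) \<partial>\<rho>) < \<infinity>"
  shows "(\<integral>\<^sup>+ y. ennreal (dist z y powr p) \<partial>\<rho>) < \<infinity>"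
proof -
  have m: "(\<lambda>y. ennreal (dist x y powr p)) \<in> borel_measurable \<rho>" using sp by (simp cong: measurable_cong_sets)
  have "(\<integral>\<^sup>+ y. ennreal (dist z y powr p) \<partial>\<rho>) \<le> (\<integral>\<^sup>+ y. ennreal (2 powr (p-1)) * (ennreal (dist z x powr p) + ennreal (dist x y powr p)) \<partial>\<rho>)"
  proof (intro nn_integral_mono)
    fix y
    have "dist z y powr p \<le> (dist z x + dist x y) powr p" using p by (intro powr_mono2) (auto intro: dist_triangle)
    also have "\<dots> \<le> 2 powr (p-1) * (dist z x powr p + dist x y powr p)" using conv_half p by simp
    finally show "ennreal (dist z y powr p) \<le> ennreal (2 powr (p-1)) * (ennreal (dist z x powr p) + ennreal (dist x y powr p))"
      by (simp add: ennreal_mult[symmetric] ennreal_plus[symmetric] del: ennreal_plus)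
  qed
  also have "\<dots> = ennreal (2 powr (p-1)) * (ennreal (dist z x powr p) * emeasure \<rho> (space \<rho>) + (\<integral>\<^sup>+ y. ennreal (dist x y powr p) \<partial>\<rho>))"
    using m by (simp add: nn_integral_cmult nn_integral_add)
  also have "\<dots> < \<infinity>" using fin prob_space.emeasure_space_1[OF ps] by (simp add: ennreal_mult_less_top)
  finally show ?thesis .
qed

lemma W_space_mom:
  fixes \<rho> :: "'a::{real_normed_vector,second_countable_topology} measure"
  assumes "\<rho> \<in> wasserstein_space p" "p \<ge> 1"
  shows "(\<integral>\<^sup>+ y. ennreal (dist x y powr p) \<partial>\<rho>) < \<infinity>"
proof -
  have "(\<integral>\<^sup>+ y. ennreal (dist 0 y powr p) \<partial>\<rho>) < \<infinity>" using assms by (simp add: wasserstein_space_def dist_norm)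
  then show ?thesis using mom_shift[of \<rho> p 0 x] assms by (auto simp: wasserstein_space_def)
qed

lemma real_of_fin:
  fixes I :: ennreal and p :: real
  assumes "I < \<infinity>" "p > 0"
  obtains G where "G \<ge> 0" "I = ennreal (G powr p)"
proof -
  define r where "r = enn2real I"
  have "I = ennreal r" "r \<ge> 0" using assms by (auto simp: r_def ennreal_enn2real_if)
  moreover have "(r powr (1/p)) powr p = r" using assms \<open>r \<ge> 0\<close> by (simp add: powr_powr)
  ultimately show ?thesis using that[of "r powr (1/p)"] by simp
qed

lemma powr_le_cancel:
  fixes a b p :: real
  assumes "p > 0" "a \<ge> 0" "b \<ge> 0" "a powr p \<le> b powr p" shows "a \<le> b"
proof (rule ccontr)
  assume "\<not> a \<le> b"
  then have "b powr p < a powr p" using assms by (intro powr_less_mono2) auto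
  then show False using assms by simp
qed

lemma cost_lower:
  fixes \<rho> \<sigma> :: "'a::{metric_space,second_countable_topology} measure"
  assumes p: "p \<ge> 1" and \<pi>: "\<pi> \<in> couplings \<rho> \<sigma>"
    and ma: "(\<integral>\<^sup>+ u. ennreal (dist x u powr p) \<partial>\<rho>) = ennreal (a powr p)"
    and mb: "(\<integral>\<^sup>+ v. ennreal (dist x v powr p) \<partial>\<sigma>) = ennreal (b powr p)"
    and a: "a \<ge> 0" and b: "b \<ge> 0"
  shows "ennreal (\<bar>a - b\<bar> powr p) \<le> cost p \<pi>"
proof (cases "cost p \<pi> < \<infinity>")
  case False then show ?thesis by (simp add: less_top[symmetric])
next
  case True
  obtain G where G: "G \<ge> 0" "cost p \<pi> = ennreal (G powr p)" using real_of_fin[OF True, of p] p by auto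
  have ps: "prob_space \<pi>" and sp: "sets \<pi> = sets borel" and m1: "distr \<pi> borel fst = \<rho>" and m2: "distr \<pi> borel snd = \<sigma>"
    using \<pi> by (auto simp: couplings_def)
  have fm: "fst \<in> measurable \<pi> borel" "snd \<in> measurable \<pi> borel" using fst_borel snd_borel sp by (simp_all cong: measurable_cong_sets)
  have mf: "(\<lambda>z. dist x (fst z)) \<in> borel_measurable \<pi>" "(\<lambda>z. dist x (snd z)) \<in> borel_measurable \<pi>"
     "(\<lambda>z. dist (fst z) (snd z)) \<in> borel_measurable \<pi>" "(\<lambda>z. dist (snd z) (fst z)) \<in> borel_measurable \<pi>"
    by (auto intro!: meas_on_pair[OF sp])
  have dm: "(\<lambda>u. ennreal (dist x u powr p)) \<in> borel_measurable borel" by measurable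
  have "(\<integral>\<^sup>+ u. ennreal (dist x u powr p) \<partial>(distr \<pi> borel fst)) = (\<integral>\<^sup>+ z. ennreal (dist x (fst z) powr p) \<partial>\<pi>)"
    by (rule nn_integral_distr[OF fm(1)]) (use dm in simp)
  then have ia: "(\<integral>\<^sup>+ z. ennreal (dist x (fst z) powr p) \<partial>\<pi>) = ennreal (a powr p)" using ma m1 by simp
  have "(\<integral>\<^sup>+ u. ennreal (dist x u powr p) \<partial>(distr \<pi> borel snd)) = (\<integral>\<^sup>+ z. ennreal (dist x (snd z) powr p) \<partial>\<pi>)"
    by (rule nn_integral_distr[OF fm(2)]) (use dm in simp)
  then have ib: "(\<integral>\<^sup>+ z. ennreal (dist x (snd z) powr p) \<partial>\<pi>) = ennreal (b powr p)" using mb m2 by simp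
  have c1: "(\<integral>\<^sup>+ z. ennreal (dist (fst z) (snd z) powr p) \<partial>\<pi>) = ennreal (G powr p)" using G by (simp add: cost_def)
  have c2: "(\<integral>\<^sup>+ z. ennreal (dist (snd z) (fst z) powr p) \<partial>\<pi>) = ennreal (G powr p)" using c1 by (simp add: dist_commute)
  have tri1: "ennreal (dist x (snd z) powr p) \<le> ennreal ((dist x (fst z) + dist (fst z) (snd z)) powr p)" for z
    using p by (intro ennreal_leI powr_mono2) (simp_all add: dist_triangle)
  have "ennreal (b powr p) \<le> (\<integral>\<^sup>+ z. ennreal ((dist x (fst z) + dist (fst z) (snd z)) powr p) \<partial>\<pi>)"
    unfolding ib[symmetric] by (rule nn_integral_mono) (rule tri1)
  also have "\<dots> \<le> ennreal ((a + G) powr p)"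
    by (rule minkowski_nn[OF p mf(1) mf(3) _ _ a G(1) ia c1]) simp_all
  finally have "b powr p \<le> (a + G) powr p" by (subst (asm) ennreal_le_iff) simp_all
  then have bG: "b \<le> a + G" using p a b G(1) by (intro powr_le_cancel[of p b "a+G"]) simp_all
  
  have tri2: "ennreal (dist x (fst z) powr p) \<le> ennreal ((dist x (snd z) + dist (snd z) (fst z)) powr p)" for z
    using p by (intro ennreal_leI powr_mono2) (simp_all add: dist_triangle)
  have "ennreal (a powr p) \<le> (\<integral>\<^sup>+ z. ennreal ((dist x (snd z) + dist (snd z) (fst z)) powr p) \<partial>\<pi>)"
    unfolding ia[symmetric] by (rule nn_integral_mono) (rule tri2)
  also have "\<dots> \<le> ennreal ((b + G) powr p)"
    by (rule minkowski_nn[OF p mf(2) mf(4) _ _ b G(1) ib c2]) simp_all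
  finally have "a powr p \<le> (b + G) powr p" by (subst (asm) ennreal_le_iff) simp_all
  then have aG: "a \<le> b + G" using p a b G(1) by (intro powr_le_cancel[of p a "b+G"]) simp_all
  from aG bG have "\<bar>a - b\<bar> \<le> G" by simp
  then have "\<bar>a - b\<bar> powr p \<le> G powr p" using p by (intro powr_mono2) simp_all
  then show ?thesis unfolding G(2) by (intro ennreal_leI)
qed



definition dil :: "'a::real_normed_vector \<Rightarrow> real \<Rightarrow> 'a \<Rightarrow> 'a" where
  "dil x \<alpha> y = x + \<alpha> *\<^sub>R (y - x)"

lemma dil_borel: "dil x \<alpha> \<in> borel_measurable borel"
  unfolding dil_def by (intro borel_measurable_continuous_onI continuous_intros)

lemma dist_dil1: "dist x (dil x \<alpha> y) = \<bar>\<alpha>\<bar> * dist x y"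
  by (simp add: dil_def dist_norm norm_minus_commute)

lemma dist_dil2: "dist (dil x \<alpha> y) (dil x \<beta> y) = \<bar>\<alpha> - \<beta>\<bar> * dist x y"
proof -
  have "dil x \<alpha> y - dil x \<beta> y = (\<alpha> - \<beta>) *\<^sub>R (y - x)" by (simp add: dil_def algebra_simps)
  then show ?thesis by (simp add: dist_norm norm_minus_commute)
qed

lemma dil_1: "dil x 1 = (\<lambda>y. y)" by (auto simp: dil_def)
lemma dil_0: "dil x 0 = (\<lambda>y. x)" by (auto simp: dil_def)

lemma dil_mom_gen:
  fixes \<rho> :: "'a::{real_normed_vector,second_countable_topology} measure"
  assumes sp: "sets \<rho> = sets borel" and a: "\<alpha> \<ge> 0" and p: "p > 0"
  shows "(\<integral>\<^sup>+ u. ennreal (dist x u powr p) \<partial>(distr \<rho> borel (dil x \<alpha>))) = ennreal (\<alpha> powr p) * (\<integral>\<^sup>+ y. ennreal (dist x y powr p) \<partial>\<rho>)"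
proof -
  have dm: "dil x \<alpha> \<in> measurable \<rho> borel" using dil_borel sp by (simp cong: measurable_cong_sets)
  have m: "(\<lambda>y. ennreal (dist x y powr p)) \<in> borel_measurable \<rho>" using sp by (simp cong: measurable_cong_sets)
  have "(\<integral>\<^sup>+ u. ennreal (dist x u powr p) \<partial>(distr \<rho> borel (dil x \<alpha>))) = (\<integral>\<^sup>+ y. ennreal (dist x (dil x \<alpha> y) powr p) \<partial>\<rho>)"
    by (rule nn_integral_distr[OF dm]) simp
  also have "\<dots> = (\<integral>\<^sup>+ y. ennreal (\<alpha> powr p) * ennreal (dist x y powr p) \<partial>\<rho>)"
    using a by (intro nn_integral_cong) (simp add: dist_dil1 powr_mult ennreal_mult)
  also have "\<dots> = ennreal (\<alpha> powr p) * (\<integral>\<^sup>+ y. ennreal (dist x y powr p) \<partial>\<rho>)"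
    by (rule nn_integral_cmult[OF m])
  finally show ?thesis .
qed

lemma dil_mom:
  fixes \<rho> :: "'a::{real_normed_vector,second_countable_topology} measure"
  assumes sp: "sets \<rho> = sets borel" and a: "\<alpha> \<ge> 0" and p: "p > 0" and R: "R \<ge> 0"
    and m: "(\<integral>\<^sup>+ y. ennreal (dist x y powr p) \<partial>\<rho>) = ennreal (R powr p)"
  shows "(\<integral>\<^sup>+ u. ennreal (dist x u powr p) \<partial>(distr \<rho> borel (dil x \<alpha>))) = ennreal ((\<alpha> * R) powr p)"
  unfolding dil_mom_gen[OF sp a p] m using a R by (simp add: ennreal_mult[symmetric] powr_mult)

lemma dil_space:
  fixes \<rho> :: "'a::{real_normed_vector,second_countable_topology} measure"
  assumes \<rho>: "\<rho> \<in> wasserstein_space p" and p: "p \<ge> 1" and a: "\<alpha> \<ge> 0"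
  shows "distr \<rho> borel (dil x \<alpha>) \<in> wasserstein_space p"
proof -
  have ps: "prob_space \<rho>" and sp: "sets \<rho> = sets borel" using \<rho> unfolding wasserstein_space_def by blast+
  have dm: "dil x \<alpha> \<in> measurable \<rho> borel" using dil_borel sp by (simp cong: measurable_cong_sets)
  have ps2: "prob_space (distr \<rho> borel (dil x \<alpha>))" by (rule prob_space.prob_space_distr[OF ps dm])
  have p0: "p > 0" using p by simp
  have fin: "(\<integral>\<^sup>+ y. ennreal (dist x y powr p) \<partial>\<rho>) < \<infinity>" by (rule W_space_mom[OF \<rho> p])
  have fin2: "(\<integral>\<^sup>+ u. ennreal (dist x u powr p) \<partial>(distr \<rho> borel (dil x \<alpha>))) < \<infinity>"
    unfolding dil_mom_gen[OF sp a p0] using fin by (simp add: ennreal_mult_less_top)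
  have sp2: "sets (distr \<rho> borel (dil x \<alpha>)) = sets borel" by simp
  have "(\<integral>\<^sup>+ u. ennreal (dist 0 u powr p) \<partial>(distr \<rho> borel (dil x \<alpha>))) < \<infinity>"
    by (rule mom_shift[OF ps2 sp2 p fin2])
  then have "(\<integral>\<^sup>+ u. ennreal (norm u powr p) \<partial>(distr \<rho> borel (dil x \<alpha>))) < \<infinity>"
    by (simp add: dist_0_norm)
  then show ?thesis unfolding wasserstein_space_def using ps2 sp2 by blast
qed

lemma diag_coupling:
  fixes \<rho> :: "'a::{metric_space,second_countable_topology} measure"
  assumes ps: "prob_space \<rho>" and sp: "sets \<rho> = sets borel"
  shows "distr \<rho> borel (\<lambda>y. (y,y)) \<in> couplings \<rho> \<rho>"
proof -
  have "(\<lambda>y::'a. (y,y)) \<in> measurable borel (borel \<Otimes>\<^sub>M borel)" by measurable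
  then have hb: "(\<lambda>y::'a. (y,y)) \<in> measurable borel borel" by (simp add: borel_prod)
  have h: "(\<lambda>y::'a. (y,y)) \<in> measurable \<rho> borel"
    using sp hb by (simp cong: measurable_cong_sets)
  have 1: "distr (distr \<rho> borel (\<lambda>y. (y,y))) borel fst = \<rho>"
    by (subst distr_distr[OF fst_borel h]) (simp add: comp_def distr_id2 sp)
  have 2: "distr (distr \<rho> borel (\<lambda>y. (y,y))) borel snd = \<rho>"
    by (subst distr_distr[OF snd_borel h]) (simp add: comp_def distr_id2 sp)
  show ?thesis unfolding couplings_def using 1 2 prob_space.prob_space_distr[OF ps h] by simp
qed

lemma dil_W:
  fixes \<rho> :: "'a::{real_normed_vector,second_countable_topology} measure"
  assumes \<rho>: "\<rho> \<in> wasserstein_space p" and p: "p > 1" and R: "R \<ge> 0"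
    and m: "(\<integral>\<^sup>+ y. ennreal (dist x y powr p) \<partial>\<rho>) = ennreal (R powr p)"
    and a: "\<alpha> \<ge> 0" and b: "\<beta> \<ge> 0"
  shows "wasserstein_dist p (distr \<rho> borel (dil x \<alpha>)) (distr \<rho> borel (dil x \<beta>)) = \<bar>\<alpha> - \<beta>\<bar> * R"
proof -
  have ps: "prob_space \<rho>" and sp: "sets \<rho> = sets borel" using \<rho> by (auto simp: wasserstein_space_def)
  define \<pi>0 where "\<pi>0 = distr (distr \<rho> borel (\<lambda>y. (y,y))) borel (\<lambda>z. (dil x \<alpha> (fst z), dil x \<beta> (snd z)))"
  have c0: "\<pi>0 \<in> couplings (distr \<rho> borel (dil x \<alpha>)) (distr \<rho> borel (dil x \<beta>))"
    unfolding \<pi>0_def by (rule couplings_map[OF diag_coupling[OF ps sp] dil_borel dil_borel])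
  have "(\<lambda>y::'a. (y,y)) \<in> measurable borel (borel \<Otimes>\<^sub>M borel)" by measurable
  then have hb: "(\<lambda>y::'a. (y,y)) \<in> measurable borel borel" by (simp add: borel_prod)
  have h: "(\<lambda>y::'a. (y,y)) \<in> measurable \<rho> borel"
    using sp hb by (simp cong: measurable_cong_sets)
  have dd: "(\<lambda>z::'a\<times>'a. ennreal (dist (dil x \<alpha> (fst z)) (dil x \<beta> (snd z)) powr p)) \<in> borel_measurable borel"
    using dil_borel[of x \<alpha>] dil_borel[of x \<beta>] unfolding borel_prod[symmetric] by measurable
  have m2: "(\<lambda>y. ennreal (dist x y powr p)) \<in> borel_measurable \<rho>" using sp by (simp cong: measurable_cong_sets)
  have "cost p \<pi>0 = (\<integral>\<^sup>+ z. ennreal (dist (dil x \<alpha> (fst z)) (dil x \<beta> (snd z)) powr p) \<partial>(distr \<rho> borel (\<lambda>y. (y,y))))"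
    unfolding \<pi>0_def by (rule cost_map[OF _ dil_borel dil_borel]) simp
  also have "\<dots> = (\<integral>\<^sup>+ y. ennreal (dist (dil x \<alpha> y) (dil x \<beta> y) powr p) \<partial>\<rho>)"
    by (subst nn_integral_distr[OF h]) (use dd in simp_all)
  also have "\<dots> = (\<integral>\<^sup>+ y. ennreal (\<bar>\<alpha> - \<beta>\<bar> powr p) * ennreal (dist x y powr p) \<partial>\<rho>)"
    by (intro nn_integral_cong) (simp add: dist_dil2 powr_mult ennreal_mult)
  also have "\<dots> = ennreal (\<bar>\<alpha> - \<beta>\<bar> powr p) * ennreal (R powr p)"
    by (simp add: nn_integral_cmult[OF m2] m)
  also have "\<dots> = ennreal ((\<bar>\<alpha> - \<beta>\<bar> * R) powr p)" using R by (simp add: ennreal_mult[symmetric] powr_mult)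
  finally have cc: "cost p \<pi>0 = ennreal ((\<bar>\<alpha> - \<beta>\<bar> * R) powr p)" .
  have lo: "ennreal ((\<bar>\<alpha> - \<beta>\<bar> * R) powr p) \<le> cost p \<pi>"
    if "\<pi> \<in> couplings (distr \<rho> borel (dil x \<alpha>)) (distr \<rho> borel (dil x \<beta>))" for \<pi>
  proof -
    have "ennreal (\<bar>\<alpha> * R - \<beta> * R\<bar> powr p) \<le> cost p \<pi>"
      by (rule cost_lower[OF _ that dil_mom[OF sp a _ R m] dil_mom[OF sp b _ R m]]) (use p a b R in simp_all)
    moreover have "\<bar>\<alpha> * R - \<beta> * R\<bar> = \<bar>\<alpha> - \<beta>\<bar> * R" using R by (simp add: left_diff_distrib[symmetric] abs_mult)
    ultimately show ?thesis by simp
  qed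
  have "(INF \<pi>\<in>couplings (distr \<rho> borel (dil x \<alpha>)) (distr \<rho> borel (dil x \<beta>)). cost p \<pi>) = ennreal ((\<bar>\<alpha> - \<beta>\<bar> * R) powr p)"
  proof (rule antisym)
    show "(INF \<pi>\<in>couplings (distr \<rho> borel (dil x \<alpha>)) (distr \<rho> borel (dil x \<beta>)). cost p \<pi>) \<le> ennreal ((\<bar>\<alpha> - \<beta>\<bar> * R) powr p)"
      using INF_lower[OF c0, of "cost p"] cc by simp
    show "ennreal ((\<bar>\<alpha> - \<beta>\<bar> * R) powr p) \<le> (INF \<pi>\<in>couplings (distr \<rho> borel (dil x \<alpha>)) (distr \<rho> borel (dil x \<beta>)). cost p \<pi>)"
      by (rule INF_greatest) (rule lo)
  qed
  then show ?thesis by (rule W_eq[OF p]) (use R in simp)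
qed



lemma marg_fst:
  fixes f :: "'a::{metric_space,second_countable_topology} \<Rightarrow> ennreal"
  assumes \<pi>: "\<pi> \<in> couplings \<rho> \<sigma>" and f: "f \<in> borel_measurable borel"
  shows "(\<integral>\<^sup>+ z. f (fst z) \<partial>\<pi>) = (\<integral>\<^sup>+ u. f u \<partial>\<rho>)"
proof -
  have sp: "sets \<pi> = sets borel" and m1: "distr \<pi> borel fst = \<rho>" using \<pi> by (auto simp: couplings_def)
  have fm: "fst \<in> measurable \<pi> borel" using fst_borel sp by (simp cong: measurable_cong_sets)
  have "(\<integral>\<^sup>+ u. f u \<partial>(distr \<pi> borel fst)) = (\<integral>\<^sup>+ z. f (fst z) \<partial>\<pi>)"
    by (rule nn_integral_distr[OF fm]) (use f in simp)
  then show ?thesis using m1 by simp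
qed

lemma marg_snd:
  fixes f :: "'a::{metric_space,second_countable_topology} \<Rightarrow> ennreal"
  assumes \<pi>: "\<pi> \<in> couplings \<rho> \<sigma>" and f: "f \<in> borel_measurable borel"
  shows "(\<integral>\<^sup>+ z. f (snd z) \<partial>\<pi>) = (\<integral>\<^sup>+ u. f u \<partial>\<sigma>)"
proof -
  have sp: "sets \<pi> = sets borel" and m2: "distr \<pi> borel snd = \<sigma>" using \<pi> by (auto simp: couplings_def)
  have fm: "snd \<in> measurable \<pi> borel" using snd_borel sp by (simp cong: measurable_cong_sets)
  have "(\<integral>\<^sup>+ u. f u \<partial>(distr \<pi> borel snd)) = (\<integral>\<^sup>+ z. f (snd z) \<partial>\<pi>)"
    by (rule nn_integral_distr[OF fm]) (use f in simp)
  then show ?thesis using m2 by simp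
qed

lemma cost_fin:
  fixes \<rho> \<sigma> :: "'a::{real_normed_vector,second_countable_topology} measure"
  assumes p: "p \<ge> 1" and \<pi>: "\<pi> \<in> couplings \<rho> \<sigma>" and \<rho>: "\<rho> \<in> wasserstein_space p" and \<sigma>: "\<sigma> \<in> wasserstein_space p"
  shows "cost p \<pi> < \<infinity>"
proof -
  have sp: "sets \<pi> = sets borel" using \<pi> by (auto simp: couplings_def)
  have dm: "(\<lambda>u::'a. ennreal (dist 0 u powr p)) \<in> borel_measurable borel" by measurable
  have m1: "(\<lambda>z. ennreal (dist 0 (fst z) powr p)) \<in> borel_measurable \<pi>"
    and m2: "(\<lambda>z. ennreal (dist 0 (snd z) powr p)) \<in> borel_measurable \<pi>"
    by (auto intro!: meas_on_pair[OF sp])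
  have "cost p \<pi> \<le> (\<integral>\<^sup>+ z. ennreal (2 powr (p-1)) * (ennreal (dist 0 (fst z) powr p) + ennreal (dist 0 (snd z) powr p)) \<partial>\<pi>)"
    unfolding cost_def
  proof (intro nn_integral_mono)
    fix z :: "'a \<times> 'a"
    have "dist (fst z) (snd z) powr p \<le> (dist 0 (fst z) + dist 0 (snd z)) powr p"
      using p dist_triangle3[of "fst z" "snd z" 0] by (intro powr_mono2) (simp_all add: dist_commute)
    also have "\<dots> \<le> 2 powr (p-1) * (dist 0 (fst z) powr p + dist 0 (snd z) powr p)" using conv_half p by simp
    finally show "ennreal (dist (fst z) (snd z) powr p) \<le> ennreal (2 powr (p-1)) * (ennreal (dist 0 (fst z) powr p) + ennreal (dist 0 (snd z) powr p))"
      by (simp add: ennreal_mult[symmetric] ennreal_plus[symmetric] del: ennreal_plus)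
  qed
  also have "\<dots> = ennreal (2 powr (p-1)) * ((\<integral>\<^sup>+ z. ennreal (dist 0 (fst z) powr p) \<partial>\<pi>) + (\<integral>\<^sup>+ z. ennreal (dist 0 (snd z) powr p) \<partial>\<pi>))"
    using m1 m2 by (simp add: nn_integral_cmult nn_integral_add)
  also have "\<dots> = ennreal (2 powr (p-1)) * ((\<integral>\<^sup>+ u. ennreal (dist 0 u powr p) \<partial>\<rho>) + (\<integral>\<^sup>+ u. ennreal (dist 0 u powr p) \<partial>\<sigma>))"
    by (simp only: marg_fst[OF \<pi> dm] marg_snd[OF \<pi> dm])
  also have "\<dots> < \<infinity>"
    using W_space_mom[OF \<rho> p, of 0] W_space_mom[OF \<sigma> p, of 0] by (simp add: ennreal_mult_less_top)
  finally show ?thesis .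
qed

lemma INF_fin:
  fixes \<rho> \<sigma> :: "'a::{real_normed_vector,second_countable_topology} measure"
  assumes p: "p \<ge> 1" and \<rho>: "\<rho> \<in> wasserstein_space p" and \<sigma>: "\<sigma> \<in> wasserstein_space p"
  shows "(INF \<pi>\<in>couplings \<rho> \<sigma>. cost p \<pi>) < \<infinity>"
proof -
  have c: "\<rho> \<Otimes>\<^sub>M \<sigma> \<in> couplings \<rho> \<sigma>" using \<rho> \<sigma> by (intro couplings_prod) (auto simp: wasserstein_space_def)
  have "(INF \<pi>\<in>couplings \<rho> \<sigma>. cost p \<pi>) \<le> cost p (\<rho> \<Otimes>\<^sub>M \<sigma>)" by (rule INF_lower[OF c])
  also have "\<dots> < \<infinity>" by (rule cost_fin[OF p c \<rho> \<sigma>])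
  finally show ?thesis .
qed

lemma mom_of_W_dirac:
  fixes \<rho> :: "'a::{real_normed_vector,second_countable_topology} measure"
  assumes p: "p > 1" and \<rho>: "\<rho> \<in> wasserstein_space p" and W: "wasserstein_dist p (return borel x) \<rho> = s"
  shows "(\<integral>\<^sup>+ y. ennreal (dist x y powr p) \<partial>\<rho>) = ennreal (s powr p)"
proof -
  have ps: "prob_space \<rho>" and sp: "sets \<rho> = sets borel" using \<rho> unfolding wasserstein_space_def by blast+
  have I: "(INF \<pi>\<in>couplings (return borel x) \<rho>. cost p \<pi>) = (\<integral>\<^sup>+ y. ennreal (dist x y powr p) \<partial>\<rho>)"
    by (rule INF_dirac[OF ps sp])
  have fin: "(INF \<pi>\<in>couplings (return borel x) \<rho>. cost p \<pi>) < \<infinity>" unfolding I using p by (intro W_space_mom[OF \<rho>]) simp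
  show ?thesis using W_to_INF[OF p fin W] unfolding I .
qed



lemma cross:
  fixes \<rho> \<nu> :: "'a::{real_normed_vector,second_countable_topology} measure"
  assumes p: "p > 1" and T: "T > 0" and \<rho>: "\<rho> \<in> wasserstein_space p" and \<nu>: "\<nu> \<in> wasserstein_space p"
    and s: "0 \<le> s" "s \<le> T" and t: "T < t"
    and m\<rho>: "(\<integral>\<^sup>+ u. ennreal (dist x u powr p) \<partial>\<rho>) = ennreal (s powr p)"
    and m\<nu>: "(\<integral>\<^sup>+ v. ennreal (dist x v powr p) \<partial>\<nu>) = ennreal (T powr p)"
    and W: "wasserstein_dist p \<rho> \<nu> = T - s"
  shows "wasserstein_dist p \<rho> (distr \<nu> borel (dil x (t/T))) = t - s"
proof -
  define c where "c = t/T"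
  have c1: "c > 1" using T t by (simp add: c_def)
  have cT: "c * T = t" using T by (simp add: c_def)
  define \<sigma> where "\<sigma> = distr \<nu> borel (dil x c)"
  have p1: "p \<ge> 1" and p0: "p > 0" using p by auto
  have ps\<nu>: "prob_space \<nu>" and sp\<nu>: "sets \<nu> = sets borel" using \<nu> unfolding wasserstein_space_def by blast+
  have ps\<rho>: "prob_space \<rho>" and sp\<rho>: "sets \<rho> = sets borel" using \<rho> unfolding wasserstein_space_def by blast+
  have m\<sigma>: "(\<integral>\<^sup>+ u. ennreal (dist x u powr p) \<partial>\<sigma>) = ennreal (t powr p)"
    unfolding \<sigma>_def using dil_mom[OF sp\<nu> _ p0 _ m\<nu>, of c] c1 T cT by simp
  have t0: "t \<ge> 0" using T t by simp
  have lo: "ennreal ((t-s) powr p) \<le> cost p \<pi>" if "\<pi> \<in> couplings \<rho> \<sigma>" for \<pi>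
  proof -
    have "ennreal (\<bar>s - t\<bar> powr p) \<le> cost p \<pi>" by (rule cost_lower[OF p1 that m\<rho> m\<sigma> s(1) t0])
    moreover have "\<bar>s - t\<bar> = t - s" using s t by simp
    ultimately show ?thesis by simp
  qed
  have I\<rho>\<nu>: "(INF \<pi>\<in>couplings \<rho> \<nu>. cost p \<pi>) = ennreal ((T-s) powr p)"
    by (rule W_to_INF[OF p INF_fin[OF p1 \<rho> \<nu>] W])
  have up: "(INF \<pi>\<in>couplings \<rho> \<sigma>. cost p \<pi>) \<le> ennreal ((t-s+e) powr p)" if e: "e > 0" for e
  proof -
    have "(INF \<pi>\<in>couplings \<rho> \<nu>. cost p \<pi>) < ennreal ((T-s+e) powr p)"
      unfolding I\<rho>\<nu> using s e p0 by (intro ennreal_lessI powr_less_mono2) simp_all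
    then obtain \<pi> where \<pi>: "\<pi> \<in> couplings \<rho> \<nu>" and c\<pi>: "cost p \<pi> < ennreal ((T-s+e) powr p)"
      by (auto simp: INF_less_iff)
    have "cost p \<pi> < \<infinity>" using c\<pi> by (rule order.strict_trans) simp
    then obtain G where G0: "G \<ge> 0" and G: "cost p \<pi> = ennreal (G powr p)" using real_of_fin[of "cost p \<pi>" p] p0 by blast
    have GT: "G < T - s + e"
    proof (rule ccontr)
      assume "\<not> G < T - s + e"
      then have "(T - s + e) powr p \<le> G powr p" using s e p0 by (intro powr_mono2) simp_all
      then have "ennreal ((T - s + e) powr p) \<le> cost p \<pi>" unfolding G by (rule ennreal_leI)
      then show False using c\<pi> by simp
    qed
    have sp: "sets \<pi> = sets borel" using \<pi> by (auto simp: couplings_def)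
    define \<pi>' where "\<pi>' = distr \<pi> borel (\<lambda>z. ((\<lambda>u. u) (fst z), dil x c (snd z)))"
    have "\<pi>' \<in> couplings (distr \<rho> borel (\<lambda>u. u)) \<sigma>"
      unfolding \<pi>'_def \<sigma>_def by (rule couplings_map[OF \<pi> _ dil_borel]) simp
    moreover have "distr \<rho> borel (\<lambda>u. u) = \<rho>" by (rule distr_id2) (simp add: sp\<rho>)
    ultimately have c\<pi>': "\<pi>' \<in> couplings \<rho> \<sigma>" by simp
    have mf: "(\<lambda>z. dist (fst z) (snd z)) \<in> borel_measurable \<pi>"
      and mg: "(\<lambda>z. (c - 1) * dist x (snd z)) \<in> borel_measurable \<pi>"
      by (auto intro!: meas_on_pair[OF sp])
    have dm: "(\<lambda>u::'a. ennreal (dist x u powr p)) \<in> borel_measurable borel" by measurable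
    have mg2: "(\<lambda>z. ennreal (dist x (snd z) powr p)) \<in> borel_measurable \<pi>" by (auto intro!: meas_on_pair[OF sp])
    have If: "(\<integral>\<^sup>+ z. ennreal (dist (fst z) (snd z) powr p) \<partial>\<pi>) = ennreal (G powr p)" using G by (simp add: cost_def)
    have "(\<integral>\<^sup>+ z. ennreal (((c - 1) * dist x (snd z)) powr p) \<partial>\<pi>) = (\<integral>\<^sup>+ z. ennreal ((c - 1) powr p) * ennreal (dist x (snd z) powr p) \<partial>\<pi>)"
      using c1 by (intro nn_integral_cong) (simp add: powr_mult ennreal_mult)
    also have "\<dots> = ennreal ((c - 1) powr p) * (\<integral>\<^sup>+ z. ennreal (dist x (snd z) powr p) \<partial>\<pi>)"
      by (rule nn_integral_cmult[OF mg2])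
    also have "\<dots> = ennreal ((c - 1) powr p) * ennreal (T powr p)"
      by (simp only: marg_snd[OF \<pi> dm] m\<nu>)
    also have "\<dots> = ennreal ((t - T) powr p)"
    proof -
      have "(c - 1) * T = t - T" using cT by (simp add: algebra_simps)
      then have "(c - 1) powr p * T powr p = (t - T) powr p" using c1 T by (simp add: powr_mult[symmetric])
      then show ?thesis using c1 by (simp add: ennreal_mult[symmetric])
    qed
    finally have Ig: "(\<integral>\<^sup>+ z. ennreal (((c - 1) * dist x (snd z)) powr p) \<partial>\<pi>) = ennreal ((t - T) powr p)" .
    have pw: "ennreal (dist (fst z) (dil x c (snd z)) powr p) \<le> ennreal ((dist (fst z) (snd z) + (c - 1) * dist x (snd z)) powr p)" for z
    proof -
      have "dist (snd z) (dil x c (snd z)) = (c - 1) * dist x (snd z)"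
        using dist_dil2[of x 1 "snd z" c] c1 by (simp add: dil_1)
      then have "dist (fst z) (dil x c (snd z)) \<le> dist (fst z) (snd z) + (c - 1) * dist x (snd z)"
        using dist_triangle[of "fst z" "dil x c (snd z)" "snd z"] by simp
      then show ?thesis using p0 by (intro ennreal_leI powr_mono2) simp_all
    qed
    have "(INF \<pi>\<in>couplings \<rho> \<sigma>. cost p \<pi>) \<le> cost p \<pi>'" by (rule INF_lower[OF c\<pi>'])
    also have "cost p \<pi>' = (\<integral>\<^sup>+ z. ennreal (dist (fst z) (dil x c (snd z)) powr p) \<partial>\<pi>)"
      unfolding \<pi>'_def by (rule cost_map[OF sp _ dil_borel]) simp
    also have "\<dots> \<le> (\<integral>\<^sup>+ z. ennreal ((dist (fst z) (snd z) + (c - 1) * dist x (snd z)) powr p) \<partial>\<pi>)"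
      by (rule nn_integral_mono) (rule pw)
    also have "\<dots> \<le> ennreal ((G + (t - T)) powr p)"
      by (rule minkowski_nn[OF p1 mf mg _ _ G0 _ If Ig]) (use c1 t in simp_all)
    also have "\<dots> \<le> ennreal ((t-s+e) powr p)"
      using GT G0 t p0 by (intro ennreal_leI powr_mono2) simp_all
    finally show ?thesis .
  qed
  have Ile: "(INF \<pi>\<in>couplings \<rho> \<sigma>. cost p \<pi>) \<le> ennreal ((t-s) powr p)"
  proof (rule ccontr)
    assume "\<not> ?thesis"
    then have gt: "ennreal ((t-s) powr p) < (INF \<pi>\<in>couplings \<rho> \<sigma>. cost p \<pi>)" by simp
    have "(INF \<pi>\<in>couplings \<rho> \<sigma>. cost p \<pi>) < \<infinity>"
    proof -
      have u1: "(INF \<pi>\<in>couplings \<rho> \<sigma>. cost p \<pi>) \<le> ennreal ((t-s+1) powr p)" by (rule up) simp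
      show ?thesis using u1 by (rule order.strict_trans1) simp
    qed
    then obtain q where q0: "q \<ge> 0" and qI: "(INF \<pi>\<in>couplings \<rho> \<sigma>. cost p \<pi>) = ennreal (q powr p)"
      using real_of_fin p0 by blast
    have "(t-s) powr p < q powr p" using gt unfolding qI using q0 by (simp add: ennreal_less_iff)
    then have qt: "t - s < q" using q0 s t p0 powr_mono2[of p q "t-s"] by (cases "t - s < q") (simp_all add: not_less)
    define e where "e = (q - (t - s)) / 2"
    have e: "e > 0" using qt by (simp add: e_def)
    have "(t - s + e) powr p < q powr p" using qt s t p0 by (intro powr_less_mono2) (simp_all add: e_def field_simps)
    moreover have "ennreal (q powr p) \<le> ennreal ((t-s+e) powr p)" using up[OF e] unfolding qI .
    ultimately show False using ennreal_le_iff s t e by (smt (verit) ennreal_le_iff powr_ge_zero)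
  qed
  have "(INF \<pi>\<in>couplings \<rho> \<sigma>. cost p \<pi>) = ennreal ((t-s) powr p)"
  proof (rule antisym)
    show "ennreal ((t-s) powr p) \<le> (INF \<pi>\<in>couplings \<rho> \<sigma>. cost p \<pi>)" by (rule INF_greatest) (rule lo)
  qed (rule Ile)
  then have "wasserstein_dist p \<rho> \<sigma> = t - s" by (rule W_eq[OF p]) (use s t in simp)
  then show ?thesis by (simp add: \<sigma>_def c_def)
qed



lemma forward:
  fixes \<gamma> :: "real \<Rightarrow> 'a::{real_normed_vector,second_countable_topology} measure"
  assumes p: "p > 1" and T: "T > 0" and geo: "wgeodesic p {0..T} \<gamma>" and \<gamma>0: "\<gamma> 0 = return borel x"
  shows "\<exists>\<gamma>'. wgeodesic p {0..} \<gamma>' \<and> (\<forall>t\<in>{0..T}. \<gamma>' t = \<gamma> t)"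
proof -
  have p1: "p \<ge> 1" using p by simp
  have mem: "\<And>s. s \<in> {0..T} \<Longrightarrow> \<gamma> s \<in> wasserstein_space p"
    and dis: "\<And>s t. s \<in> {0..T} \<Longrightarrow> t \<in> {0..T} \<Longrightarrow> wasserstein_dist p (\<gamma> s) (\<gamma> t) = \<bar>s - t\<bar>"
    using geo unfolding wgeodesic_def by blast+
  have T0: "T \<in> {0..T}" "0 \<in> {0..T}" using T by auto
  define \<nu> where "\<nu> = \<gamma> T"
  have mom: "(\<integral>\<^sup>+ y. ennreal (dist x y powr p) \<partial>(\<gamma> s)) = ennreal (s powr p)" if s: "s \<in> {0..T}" for s
  proof -
    have "wasserstein_dist p (return borel x) (\<gamma> s) = s" using dis[OF T0(2) s] s \<gamma>0 by simp
    then show ?thesis by (rule mom_of_W_dirac[OF p mem[OF s]])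
  qed
  define \<gamma>' where "\<gamma>' t = (if t \<le> T then \<gamma> t else distr \<nu> borel (dil x (t/T)))" for t
  have mem': "\<gamma>' t \<in> wasserstein_space p" if "t \<ge> 0" for t
  proof (cases "t \<le> T")
    case True then show ?thesis using that mem by (simp add: \<gamma>'_def)
  next
    case False then show ?thesis unfolding \<gamma>'_def \<nu>_def using dil_space[OF mem[OF T0(1)] p1, of "t/T" x] T by simp
  qed
  have crossW: "wasserstein_dist p (\<gamma> s) (\<gamma>' t) = t - s" if s: "s \<in> {0..T}" and t: "T < t" for s t
  proof -
    have "\<gamma>' t = distr \<nu> borel (dil x (t/T))" using t by (simp add: \<gamma>'_def)
    moreover have "wasserstein_dist p (\<gamma> s) \<nu> = T - s" using dis[OF s T0(1)] s by (simp add: \<nu>_def)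
    ultimately show ?thesis
      using cross[OF p T mem[OF s] mem[OF T0(1)] _ _ t mom[OF s] mom[OF T0(1)]] s by (simp add: \<nu>_def)
  qed
  have dd: "wasserstein_dist p (\<gamma>' s) (\<gamma>' t) = \<bar>s - t\<bar>" if s0: "s \<ge> 0" and t0: "t \<ge> 0" for s t
  proof (cases "s \<le> T")
    case sT: True
    show ?thesis
    proof (cases "t \<le> T")
      case True then show ?thesis using sT s0 t0 dis by (simp add: \<gamma>'_def)
    next
      case False
      then have "wasserstein_dist p (\<gamma> s) (\<gamma>' t) = t - s" using sT s0 by (intro crossW) auto
      then show ?thesis using sT False by (simp add: \<gamma>'_def)
    qed
  next
    case sT: False
    show ?thesis
    proof (cases "t \<le> T")
      case True
      then have "wasserstein_dist p (\<gamma> t) (\<gamma>' s) = s - t" using sT t0 by (intro crossW) auto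
      then show ?thesis using sT True W_sym[of p "\<gamma> t" "\<gamma>' s"] by (simp add: \<gamma>'_def)
    next
      case False
      have "wasserstein_dist p (distr \<nu> borel (dil x (s/T))) (distr \<nu> borel (dil x (t/T))) = \<bar>s/T - t/T\<bar> * T"
        unfolding \<nu>_def by (rule dil_W[OF mem[OF T0(1)] p _ mom[OF T0(1)]]) (use T s0 t0 in simp_all)
      also have "\<bar>s/T - t/T\<bar> * T = \<bar>s - t\<bar>" using T by (simp add: diff_divide_distrib[symmetric] abs_div)
      finally show ?thesis using sT False by (simp add: \<gamma>'_def \<nu>_def)
    qed
  qed
  have "wgeodesic p {0..} \<gamma>'" unfolding wgeodesic_def using mem' dd by auto
  moreover have "\<forall>t\<in>{0..T}. \<gamma>' t = \<gamma> t" by (simp add: \<gamma>'_def)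
  ultimately show ?thesis by blast
qed



lemma inner_eq_case:
  fixes u v :: "'a::real_inner"
  assumes "norm (u - v) = norm u + norm v"
  shows "inner u v = - (norm u * norm v)"
proof -
  have "(norm (u - v))\<^sup>2 = (norm u + norm v)\<^sup>2" using assms by simp
  moreover have "(norm (u - v))\<^sup>2 = inner u u - inner u v - inner v u + inner v v"
    by (simp add: power2_norm_eq_inner inner_diff_left inner_diff_right)
  moreover have "(norm u + norm v)\<^sup>2 = inner u u + 2 * (norm u * norm v) + inner v v"
    by (simp add: power2_sum power2_norm_eq_inner)
  moreover have "inner v u = inner u v" by (rule inner_commute)
  ultimately show ?thesis by linarith
qed

lemma antiparallel:
  fixes u v :: "'a::real_inner"
  assumes e: "inner u v = - (norm u * norm v)" and v: "v \<noteq> 0"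
  shows "u = - (norm u / norm v) *\<^sub>R v"
proof -
  define k where "k = norm u / norm v"
  have nv: "norm v > 0" using v by simp
  have kv: "k * norm v = norm u" using nv by (simp add: k_def)
  have "inner (u + k *\<^sub>R v) (u + k *\<^sub>R v) = inner u u + k * inner u v + k * inner v u + k * k * inner v v"
    by (simp add: inner_add_left inner_add_right algebra_simps)
  also have "\<dots> = (norm u)\<^sup>2 - 2 * (k * norm v) * norm u + (k * norm v)\<^sup>2"
  proof -
    have uu: "inner u u = norm u * norm u" and vv: "inner v v = norm v * norm v"
      by (simp_all add: dot_square_norm power2_eq_square)
    show ?thesis unfolding uu vv inner_commute[of v u] e by (simp add: power2_eq_square algebra_simps)
  qed
  also have "\<dots> = 0" unfolding kv by (simp add: power2_eq_square)
  finally have "u + k *\<^sub>R v = 0" by simp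
  then show ?thesis by (simp add: k_def[symmetric] eq_neg_iff_add_eq_0)
qed

lemma eq_case:
  fixes x y x0 :: "'a::real_inner"
  assumes p: "p \<ge> 1" and h: "2 powr (p-1) * (dist x0 x powr p + dist x0 y powr p) \<le> dist x y powr p"
  shows "inner (x - x0) (y - x0) = - (norm (x - x0) * norm (y - x0))"
proof -
  have tri: "dist x y \<le> dist x0 x + dist x0 y" using dist_triangle[of x y x0] dist_commute[of x x0] by simp
  have "(dist x0 x + dist x0 y) powr p \<le> 2 powr (p-1) * (dist x0 x powr p + dist x0 y powr p)"
    by (rule conv_half) (simp_all add: p)
  also note h
  finally have le: "(dist x0 x + dist x0 y) powr p \<le> dist x y powr p" .
  have "dist x0 x + dist x0 y \<le> dist x y" by (rule powr_le_cancel[OF _ _ _ le]) (use p in simp_all)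
  then have "dist x y = dist x0 x + dist x0 y" using tri by simp
  moreover have "(x - x0) - (y - x0) = x - y" by simp
  moreover have "dist x0 x = norm (x - x0)" "dist x0 y = norm (y - x0)" "dist x y = norm (x - y)"
    by (simp_all add: dist_norm norm_minus_commute)
  ultimately have "norm ((x - x0) - (y - x0)) = norm (x - x0) + norm (y - x0)" by simp
  then show ?thesis by (rule inner_eq_case)
qed

lemma space_W:
  assumes "\<mu> \<in> wasserstein_space p" shows "space \<mu> = UNIV"
proof -
  have "sets \<mu> = sets borel" using assms by (simp add: wasserstein_space_def)
  then have "space \<mu> = space borel" by (rule sets_eq_imp_space_eq)
  then show ?thesis by simp
qed

lemma integrable_inner:
  fixes \<mu> :: "'a::{real_inner,second_countable_topology} measure"
  assumes mu: "\<mu> \<in> wasserstein_space p" and p: "p \<ge> 1"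
  shows "integrable \<mu> (\<lambda>x. inner x w)"
proof -
  have ps: "prob_space \<mu>" and sp: "sets \<mu> = sets borel" using mu unfolding wasserstein_space_def by blast+
  have m: "(\<lambda>x. inner x w) \<in> borel_measurable \<mu>" using sp by (simp cong: measurable_cong_sets)
  have m2: "(\<lambda>x. ennreal (norm x powr p)) \<in> borel_measurable \<mu>" using sp by (simp cong: measurable_cong_sets)
  have fin: "(\<integral>\<^sup>+ x. ennreal (norm x powr p) \<partial>\<mu>) < \<infinity>" using mu by (simp add: wasserstein_space_def)
  have "(\<integral>\<^sup>+ x. ennreal (norm (inner x w)) \<partial>\<mu>) \<le> (\<integral>\<^sup>+ x. ennreal (norm w) * (1 + ennreal (norm x powr p)) \<partial>\<mu>)"
  proof (intro nn_integral_mono)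
    fix x :: 'a
    have "norm x \<le> 1 + norm x powr p"
    proof (cases "norm x \<le> 1")
      case True then show ?thesis using powr_ge_zero[of "norm x" p] by linarith
    next
      case False
      then have "norm x powr 1 \<le> norm x powr p" using p by (intro powr_mono) simp_all
      then show ?thesis using False by simp
    qed
    then have "norm (inner x w) \<le> norm w * (1 + norm x powr p)"
    proof -
      have "norm (inner x w) \<le> norm x * norm w" using Cauchy_Schwarz_ineq2[of x w] by simp
      also have "\<dots> \<le> (1 + norm x powr p) * norm w" by (rule mult_right_mono) (use \<open>norm x \<le> 1 + norm x powr p\<close> in simp_all)
      finally show ?thesis by (simp add: mult.commute)
    qed
    then have "ennreal (norm (inner x w)) \<le> ennreal (norm w * (1 + norm x powr p))" by (rule ennreal_leI)
    also have "ennreal (norm w * (1 + norm x powr p)) = ennreal (norm w) * (1 + ennreal (norm x powr p))"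
      by (simp add: ennreal_mult)
    finally show "ennreal (norm (inner x w)) \<le> ennreal (norm w) * (1 + ennreal (norm x powr p))" .
  qed
  also have "\<dots> = ennreal (norm w) * (\<integral>\<^sup>+ x. (1 + ennreal (norm x powr p)) \<partial>\<mu>)"
    by (rule nn_integral_cmult) (use m2 in simp)
  also have "(\<integral>\<^sup>+ x. (1 + ennreal (norm x powr p)) \<partial>\<mu>) = (\<integral>\<^sup>+ x. 1 \<partial>\<mu>) + (\<integral>\<^sup>+ x. ennreal (norm x powr p) \<partial>\<mu>)"
    by (rule nn_integral_add) (use m2 in simp_all)
  also have "(\<integral>\<^sup>+ x. 1 \<partial>\<mu>) = 1" using prob_space.emeasure_space_1[OF ps] by simp
  also have "ennreal (norm w) * (1 + (\<integral>\<^sup>+ x. ennreal (norm x powr p) \<partial>\<mu>)) < \<infinity>"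
    using fin by (simp add: ennreal_mult_less_top)
  finally show ?thesis by (intro integrableI_bounded[OF m])
qed



lemma split_mean:
  fixes f :: "'b \<Rightarrow> real"
  assumes ps: "prob_space \<mu>" and int: "integrable \<mu> f" and nc: "\<And>c. \<not> (AE x in \<mu>. f x = c)"
  shows "\<exists>c. emeasure \<mu> {x\<in>space \<mu>. f x < c} > 0 \<and> emeasure \<mu> {x\<in>space \<mu>. f x > c} > 0"
proof -
  interpret P: prob_space \<mu> by (rule ps)
  have fm[measurable]: "f \<in> borel_measurable \<mu>" using int by (rule borel_measurable_integrable)
  define E where "E = integral\<^sup>L \<mu> f"
  have s1: "{x\<in>space \<mu>. f x < E} \<in> sets \<mu>" by measurable
  have s2: "{x\<in>space \<mu>. f x > E} \<in> sets \<mu>" by measurable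
  have intc: "integral\<^sup>L \<mu> (\<lambda>x. E) = E" by (simp add: P.prob_space)
  have "emeasure \<mu> {x\<in>space \<mu>. f x > E} > 0"
  proof (rule ccontr)
    assume "\<not> ?thesis"
    then have z: "emeasure \<mu> {x\<in>space \<mu>. f x > E} = 0" by (simp add: not_gr_zero)
    have ae: "AE x in \<mu>. f x \<le> E" by (subst AE_iff_measurable[OF s2]) (auto simp: z)
    have "integral\<^sup>L \<mu> (\<lambda>x. E - f x) = 0"
      using int intc by (simp add: Bochner_Integration.integral_diff integrable_const E_def)
    then have "AE x in \<mu>. E - f x = 0"
      by (subst (asm) integral_nonneg_eq_0_iff_AE) (use int ae integrable_const in auto)
    then have "AE x in \<mu>. f x = E" by eventually_elim simp
    then show False using nc by blast
  qed
  moreover have "emeasure \<mu> {x\<in>space \<mu>. f x < E} > 0"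
  proof (rule ccontr)
    assume "\<not> ?thesis"
    then have z: "emeasure \<mu> {x\<in>space \<mu>. f x < E} = 0" by (simp add: not_gr_zero)
    have ae: "AE x in \<mu>. E \<le> f x" by (subst AE_iff_measurable[OF s1]) (auto simp: z)
    have "integral\<^sup>L \<mu> (\<lambda>x. f x - E) = 0"
      using int intc by (simp add: Bochner_Integration.integral_diff integrable_const E_def)
    then have "AE x in \<mu>. f x - E = 0"
      by (subst (asm) integral_nonneg_eq_0_iff_AE) (use int ae integrable_const in auto)
    then have "AE x in \<mu>. f x = E" by eventually_elim simp
    then show False using nc by blast
  qed
  ultimately show ?thesis by blast
qed


lemma const_dir:
  fixes \<mu> :: "'a::{real_inner,second_countable_topology} measure"
  assumes ps: "prob_space \<mu>" and sp: "sets \<mu> = sets borel" and h: "\<forall>w. \<exists>c. AE x in \<mu>. inner x w = c"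
  shows "\<exists>x1. \<mu> = return borel x1"
proof -
  interpret P: prob_space \<mu> by (rule ps)
  obtain cf where cf: "\<And>w. AE x in \<mu>. inner x w = cf w" using h by metis
  obtain D :: "'a set" where D: "countable D" "\<And>X. open X \<Longrightarrow> X \<noteq> {} \<Longrightarrow> \<exists>d\<in>D. d \<in> X"
    using countable_dense_exists by blast
  have aeD: "AE x in \<mu>. \<forall>w\<in>D. inner x w = cf w"
    using D(1) cf by (subst AE_ball_countable) auto
  obtain x1 where x1: "\<forall>w\<in>D. inner x1 w = cf w"
  proof (rule ccontr)
    assume "\<not> thesis"
    then have "\<forall>x. \<not> (\<forall>w\<in>D. inner x w = cf w)" using that by blast
    then have "AE x in \<mu>. False" using aeD by (rule_tac AE_mp[OF aeD]) auto
    then show False by simp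
  qed
  have ae: "AE x in \<mu>. x = x1"
    using aeD
  proof eventually_elim
    fix x assume a: "\<forall>w\<in>D. inner x w = cf w"
    show "x = x1"
    proof (rule ccontr)
      assume "x \<noteq> x1"
      define X where "X = {w. inner (x - x1) w \<noteq> 0}"
      have "open X" unfolding X_def by (intro open_Collect_neq continuous_intros)
      moreover have "x - x1 \<in> X" using \<open>x \<noteq> x1\<close> by (simp add: X_def)
      ultimately obtain d where "d \<in> D" "d \<in> X" using D(2)[of X] by blast
      then show False using a x1 by (simp add: X_def inner_diff_left)
    qed
  qed
  have "\<mu> = return borel x1"
  proof (rule measure_eqI)
    show "sets \<mu> = sets (return borel x1)" using sp by simp
    fix A assume A: "A \<in> sets \<mu>"
    have "emeasure \<mu> A = (\<integral>\<^sup>+ x. indicator A x \<partial>\<mu>)" using A by simp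
    also have "\<dots> = (\<integral>\<^sup>+ x. indicator A x1 \<partial>\<mu>)" by (intro nn_integral_cong_AE) (use ae in auto)
    also have "\<dots> = indicator A x1" by (simp add: P.emeasure_space_1)
    also have "\<dots> = emeasure (return borel x1) A" using A sp by simp
    finally show "emeasure \<mu> A = emeasure (return borel x1) A" .
  qed
  then show ?thesis by blast
qed

lemma hyperplane:
  fixes \<mu> :: "'a::{real_inner,second_countable_topology} measure"
  assumes mu: "\<mu> \<in> wasserstein_space p" and p: "p \<ge> 1" and nd: "\<not> (\<exists>x. \<mu> = return borel x)"
  shows "\<exists>w c. emeasure \<mu> {x. inner x w < c} > 0 \<and> emeasure \<mu> {x. inner x w > c} > 0"
proof -
  have ps: "prob_space \<mu>" and sp: "sets \<mu> = sets borel" using mu unfolding wasserstein_space_def by blast+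
  obtain w where w: "\<And>c. \<not> (AE x in \<mu>. inner x w = c)" using const_dir[OF ps sp] nd by blast
  obtain c where "emeasure \<mu> {x\<in>space \<mu>. inner x w < c} > 0 \<and> emeasure \<mu> {x\<in>space \<mu>. inner x w > c} > 0"
    using split_mean[OF ps integrable_inner[OF mu p] w] by blast
  then show ?thesis using space_W[OF mu] by auto
qed



lemma AE_null:
  assumes "{x. Q x} \<in> sets \<mu>" "space \<mu> = UNIV" "AE x in \<mu>. \<not> Q x"
  shows "emeasure \<mu> {x. Q x} = 0"
  using assms AE_iff_measurable[of "{x. Q x}" \<mu> "\<lambda>x. \<not> Q x"] by simp

lemma backward:
  fixes \<mu> :: "'a::{real_inner,second_countable_topology} measure"
  assumes p: "p > 1" and mu: "\<mu> \<in> wasserstein_space p" and nd: "\<not> (\<exists>x. \<mu> = return borel x)"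
  shows "\<exists>T \<gamma>. T > 0 \<and> wgeodesic p {0..T} \<gamma> \<and> \<gamma> 0 = \<mu> \<and>
           \<not> (\<exists>\<gamma>'. wgeodesic p {0..} \<gamma>' \<and> (\<forall>t\<in>{0..T}. \<gamma>' t = \<gamma> t))"
proof -
  have p1: "p \<ge> 1" and p0: "p > 0" using p by auto
  have ps: "prob_space \<mu>" and sp: "sets \<mu> = sets borel" using mu unfolding wasserstein_space_def by blast+
  interpret P: prob_space \<mu> by (rule ps)
  have spU: "space \<mu> = UNIV" by (rule space_W[OF mu])
  obtain w c where A1: "emeasure \<mu> {x. inner x w < c} > 0" and A2: "emeasure \<mu> {x. inner x w > c} > 0"
    using hyperplane[OF mu p1 nd] by blast
  have S1: "{x. inner x w < c} \<in> sets \<mu>" unfolding sp by (intro borel_open open_Collect_less continuous_intros)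
  have S2: "{x. inner x w > c} \<in> sets \<mu>" unfolding sp by (intro borel_open open_Collect_less continuous_intros)
  have w0: "w \<noteq> 0"
  proof
    assume "w = 0"
    then show False using A1 A2 by (cases "0 < c") auto
  qed
  define x0 where "x0 = (c / inner w w) *\<^sub>R w"
  have ix0: "inner x0 w = c" using w0 by (simp add: x0_def)
  have fin: "(\<integral>\<^sup>+ y. ennreal (dist x0 y powr p) \<partial>\<mu>) < \<infinity>" by (rule W_space_mom[OF mu p1])
  obtain T where T0: "T \<ge> 0" and mT: "(\<integral>\<^sup>+ y. ennreal (dist x0 y powr p) \<partial>\<mu>) = ennreal (T powr p)"
    using real_of_fin[OF fin p0] by blast
  have Tpos: "T > 0"
  proof (rule ccontr)
    assume "\<not> T > 0"
    then have "T = 0" using T0 by simp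
    then have "(\<integral>\<^sup>+ y. ennreal (dist x0 y powr p) \<partial>\<mu>) = 0" using mT by simp
    then have "AE y in \<mu>. dist x0 y = 0"
      by (intro AE_zero_of_int0[OF p0]) (use sp in \<open>simp_all cong: measurable_cong_sets\<close>)
    then have "AE y in \<mu>. \<not> inner y w < c" by eventually_elim (use ix0 in simp)
    then have "emeasure \<mu> {x. inner x w < c} = 0" by (rule AE_null[OF S1 spU])
    then show False using A1 by simp
  qed
  define \<gamma> where "\<gamma> t = distr \<mu> borel (dil x0 (1 - t/T))" for t
  have geo: "wgeodesic p {0..T} \<gamma>"
    unfolding wgeodesic_def
  proof safe
    fix t assume "t \<in> {0..T}"
    then have "1 - t/T \<ge> 0" using Tpos by (simp add: field_simps)
    then show "\<gamma> t \<in> wasserstein_space p" unfolding \<gamma>_def by (rule dil_space[OF mu p1])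
  next
    fix s t assume s: "s \<in> {0..T}" and t: "t \<in> {0..T}"
    then have a: "1 - s/T \<ge> 0" "1 - t/T \<ge> 0" using Tpos by (simp_all add: field_simps)
    have "wasserstein_dist p (\<gamma> s) (\<gamma> t) = \<bar>(1 - s/T) - (1 - t/T)\<bar> * T"
      unfolding \<gamma>_def by (rule dil_W[OF mu p T0 mT a])
    also have "\<dots> = \<bar>s - t\<bar>" using Tpos by (simp add: abs_div diff_divide_distrib[symmetric] abs_minus_commute)
    finally show "wasserstein_dist p (\<gamma> s) (\<gamma> t) = \<bar>s - t\<bar>" .
  qed
  have \<gamma>0: "\<gamma> 0 = \<mu>" unfolding \<gamma>_def by (simp add: dil_1 distr_id2 sp)
  have \<gamma>T: "\<gamma> T = return borel x0" unfolding \<gamma>_def using Tpos by (simp add: dil_0)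
  have noext: "\<not> (\<exists>\<gamma>'. wgeodesic p {0..} \<gamma>' \<and> (\<forall>t\<in>{0..T}. \<gamma>' t = \<gamma> t))"
  proof
    assume "\<exists>\<gamma>'. wgeodesic p {0..} \<gamma>' \<and> (\<forall>t\<in>{0..T}. \<gamma>' t = \<gamma> t)"
    then obtain \<gamma>' where g': "wgeodesic p {0..} \<gamma>'" and agree: "\<forall>t\<in>{0..T}. \<gamma>' t = \<gamma> t" by blast
    have mem': "\<And>t. t \<ge> 0 \<Longrightarrow> \<gamma>' t \<in> wasserstein_space p"
      and dis': "\<And>s t. s \<ge> 0 \<Longrightarrow> t \<ge> 0 \<Longrightarrow> wasserstein_dist p (\<gamma>' s) (\<gamma>' t) = \<bar>s - t\<bar>"
      using g' unfolding wgeodesic_def by auto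
    define \<nu> where "\<nu> = \<gamma>' (2*T)"
    have \<nu>: "\<nu> \<in> wasserstein_space p" unfolding \<nu>_def using Tpos by (intro mem') simp
    have g'T: "\<gamma>' T = return borel x0" using agree Tpos \<gamma>T by auto
    have g'0: "\<gamma>' 0 = \<mu>" using agree Tpos \<gamma>0 by auto
    have "wasserstein_dist p (return borel x0) \<nu> = T"
      using dis'[of T "2*T"] Tpos g'T by (simp add: \<nu>_def)
    then have m\<nu>: "(\<integral>\<^sup>+ y. ennreal (dist x0 y powr p) \<partial>\<nu>) = ennreal (T powr p)"
      by (rule mom_of_W_dirac[OF p \<nu>])
    have "wasserstein_dist p \<mu> \<nu> = 2 * T"
      using dis'[of 0 "2*T"] Tpos g'0 by (simp add: \<nu>_def)
    then have I: "(INF \<pi>\<in>couplings \<mu> \<nu>. cost p \<pi>) = ennreal ((2*T) powr p)"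
      by (rule W_to_INF[OF p INF_fin[OF p1 mu \<nu>]])
    have ps\<nu>: "prob_space \<nu>" and sp\<nu>: "sets \<nu> = sets borel" using \<nu> unfolding wasserstein_space_def by blast+
    have cpl: "\<mu> \<Otimes>\<^sub>M \<nu> \<in> couplings \<mu> \<nu>" by (rule couplings_prod[OF ps sp ps\<nu> sp\<nu>])
    have spp: "sets (\<mu> \<Otimes>\<^sub>M \<nu>) = sets borel" using cpl by (simp add: couplings_def)
    have low: "ennreal ((2*T) powr p) \<le> cost p (\<mu> \<Otimes>\<^sub>M \<nu>)" unfolding I[symmetric] by (rule INF_lower[OF cpl])
    define Cf where "Cf z = 2 powr (p-1) * (dist x0 (fst z) powr p + dist x0 (snd z) powr p)" for z :: "'a \<times> 'a"
    define df where "df z = dist (fst z) (snd z) powr p" for z :: "'a \<times> 'a"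
    have d0: "df z \<ge> 0" for z by (simp add: df_def)
    have dC: "df z \<le> Cf z" for z
    proof -
      have "dist (fst z) (snd z) powr p \<le> (dist x0 (fst z) + dist x0 (snd z)) powr p"
        using p0 dist_triangle[of "fst z" "snd z" x0] dist_commute[of "fst z" x0] by (intro powr_mono2) simp_all
      also have "\<dots> \<le> Cf z" unfolding Cf_def by (rule conv_half) (simp_all add: p1)
      finally show ?thesis by (simp add: df_def)
    qed
    have mCf: "Cf \<in> borel_measurable (\<mu> \<Otimes>\<^sub>M \<nu>)" unfolding Cf_def by (intro meas_on_pair[OF spp]) measurable
    have mdf: "df \<in> borel_measurable (\<mu> \<Otimes>\<^sub>M \<nu>)" unfolding df_def by (intro meas_on_pair[OF spp]) measurable
    have dm: "(\<lambda>u::'a. ennreal (dist x0 u powr p)) \<in> borel_measurable borel" by measurable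
    have m1: "(\<lambda>z. ennreal (dist x0 (fst z) powr p)) \<in> borel_measurable (\<mu> \<Otimes>\<^sub>M \<nu>)"
      and m2: "(\<lambda>z. ennreal (dist x0 (snd z) powr p)) \<in> borel_measurable (\<mu> \<Otimes>\<^sub>M \<nu>)"
      by (auto intro!: meas_on_pair[OF spp])
    have "(\<integral>\<^sup>+ z. ennreal (Cf z) \<partial>(\<mu> \<Otimes>\<^sub>M \<nu>)) = (\<integral>\<^sup>+ z. ennreal (2 powr (p-1)) * (ennreal (dist x0 (fst z) powr p) + ennreal (dist x0 (snd z) powr p)) \<partial>(\<mu> \<Otimes>\<^sub>M \<nu>))"
      by (intro nn_integral_cong) (simp add: Cf_def ennreal_mult ennreal_plus)
    also have "\<dots> = ennreal (2 powr (p-1)) * ((\<integral>\<^sup>+ z. ennreal (dist x0 (fst z) powr p) \<partial>(\<mu> \<Otimes>\<^sub>M \<nu>)) + (\<integral>\<^sup>+ z. ennreal (dist x0 (snd z) powr p) \<partial>(\<mu> \<Otimes>\<^sub>M \<nu>)))"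
      using m1 m2 by (simp add: nn_integral_cmult nn_integral_add)
    also have "\<dots> = ennreal (2 powr (p-1)) * (ennreal (T powr p) + ennreal (T powr p))"
      by (simp only: marg_fst[OF cpl dm] marg_snd[OF cpl dm] mT m\<nu>)
    also have "\<dots> = ennreal ((2*T) powr p)"
    proof -
      have "2 powr (p-1) * (T powr p + T powr p) = (2 powr (p-1) * 2 powr 1) * T powr p" by simp
      also have "\<dots> = (2*T) powr p"
      proof -
        have "2 powr (p-1) * 2 powr 1 = (2::real) powr p" using powr_mult_base[of 2 "p-1"] by (simp add: mult.commute)
        then show ?thesis using T0 by (simp add: powr_mult)
      qed
      finally show ?thesis by (simp add: ennreal_mult[symmetric] ennreal_plus[symmetric] del: ennreal_plus)
    qed
    finally have IC: "(\<integral>\<^sup>+ z. ennreal (Cf z) \<partial>(\<mu> \<Otimes>\<^sub>M \<nu>)) = ennreal ((2*T) powr p)" .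
    have "(\<integral>\<^sup>+ z. ennreal (Cf z) \<partial>(\<mu> \<Otimes>\<^sub>M \<nu>)) = (\<integral>\<^sup>+ z. ennreal (df z) + ennreal (Cf z - df z) \<partial>(\<mu> \<Otimes>\<^sub>M \<nu>))"
      using d0 dC by (intro nn_integral_cong) (simp add: ennreal_plus[symmetric] del: ennreal_plus)
    also have "\<dots> = (\<integral>\<^sup>+ z. ennreal (df z) \<partial>(\<mu> \<Otimes>\<^sub>M \<nu>)) + (\<integral>\<^sup>+ z. ennreal (Cf z - df z) \<partial>(\<mu> \<Otimes>\<^sub>M \<nu>))"
      by (rule nn_integral_add) (use mCf mdf in simp_all)
    also have "(\<integral>\<^sup>+ z. ennreal (df z) \<partial>(\<mu> \<Otimes>\<^sub>M \<nu>)) = cost p (\<mu> \<Otimes>\<^sub>M \<nu>)" by (simp add: cost_def df_def)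
    finally have sum: "ennreal ((2*T) powr p) = cost p (\<mu> \<Otimes>\<^sub>M \<nu>) + (\<integral>\<^sup>+ z. ennreal (Cf z - df z) \<partial>(\<mu> \<Otimes>\<^sub>M \<nu>))"
      using IC by simp
    have "ennreal ((2*T) powr p) + (\<integral>\<^sup>+ z. ennreal (Cf z - df z) \<partial>(\<mu> \<Otimes>\<^sub>M \<nu>)) \<le> ennreal ((2*T) powr p) + 0"
      using low sum by (metis add.right_neutral add_right_mono)
    then have "(\<integral>\<^sup>+ z. ennreal (Cf z - df z) \<partial>(\<mu> \<Otimes>\<^sub>M \<nu>)) \<le> 0"
      by (subst (asm) ennreal_add_left_cancel_le) simp
    then have "(\<integral>\<^sup>+ z. ennreal (Cf z - df z) \<partial>(\<mu> \<Otimes>\<^sub>M \<nu>)) = 0" by simp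
    then have "AE z in \<mu> \<Otimes>\<^sub>M \<nu>. ennreal (Cf z - df z) = 0"
      by (subst (asm) nn_integral_0_iff_AE) (use mCf mdf in simp_all)
    then have aeP: "AE z in \<mu> \<Otimes>\<^sub>M \<nu>. Cf z \<le> df z" by eventually_elim (simp add: ennreal_eq_0_iff)
    interpret PP: pair_prob_space \<mu> \<nu>
      using ps ps\<nu> by (simp add: pair_prob_space_def pair_sigma_finite_def prob_space_imp_sigma_finite)
    have Pset: "{z\<in>space (\<mu> \<Otimes>\<^sub>M \<nu>). Cf (fst z, snd z) \<le> df (fst z, snd z)} \<in> sets (\<mu> \<Otimes>\<^sub>M \<nu>)"
      using mCf mdf by simp
    have "AE x in \<mu>. AE y in \<nu>. Cf (x, y) \<le> df (x, y)"
      using aeP by (subst PP.AE_pair_iff[OF Pset]) simp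
    then have aeyx: "AE y in \<nu>. AE x in \<mu>. Cf (x, y) \<le> df (x, y)"
      by (subst (asm) PP.AE_commute[OF Pset])
    have "\<not> (AE y in \<nu>. y = x0)"
    proof
      assume "AE y in \<nu>. y = x0"
      then have "(\<integral>\<^sup>+ y. ennreal (dist x0 y powr p) \<partial>\<nu>) = (\<integral>\<^sup>+ y. 0 \<partial>\<nu>)"
        by (intro nn_integral_cong_AE) (auto elim!: eventually_mono)
      then have "ennreal (T powr p) = 0" using m\<nu> by simp
      then show False using Tpos by simp
    qed
    then obtain y where y: "y \<noteq> x0" and aex: "AE x in \<mu>. Cf (x, y) \<le> df (x, y)"
      using aeyx by (metis (mono_tags, lifting) eventually_mono)
    define v where "v = y - x0"
    have v0: "v \<noteq> 0" using y by (simp add: v_def)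
    have aelin: "AE x in \<mu>. inner x w - c = - (norm (x - x0) / norm v) * inner v w"
      using aex
    proof eventually_elim
      fix x assume "Cf (x, y) \<le> df (x, y)"
      then have "inner (x - x0) v = - (norm (x - x0) * norm v)"
        unfolding v_def by (intro eq_case[OF p1]) (simp add: Cf_def df_def)
      then have "x - x0 = - (norm (x - x0) / norm v) *\<^sub>R v" by (rule antiparallel[OF _ v0])
      then have "inner (x - x0) w = inner (- (norm (x - x0) / norm v) *\<^sub>R v) w" by simp
      then show "inner x w - c = - (norm (x - x0) / norm v) * inner v w"
        using ix0 by (simp add: inner_diff_left)
    qed
    show False
    proof (cases "inner v w \<ge> 0")
      case True
      have "AE x in \<mu>. \<not> inner x w > c" using aelin
      proof eventually_elim
        fix x assume "inner x w - c = - (norm (x - x0) / norm v) * inner v w"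
        moreover have "(norm (x - x0) / norm v) * inner v w \<ge> 0" using True by simp
        ultimately show "\<not> inner x w > c" by simp
      qed
      then have "emeasure \<mu> {x. inner x w > c} = 0" by (rule AE_null[OF S2 spU])
      then show False using A2 by simp
    next
      case False
      have "AE x in \<mu>. \<not> inner x w < c" using aelin
      proof eventually_elim
        fix x assume "inner x w - c = - (norm (x - x0) / norm v) * inner v w"
        moreover have "(norm (x - x0) / norm v) * inner v w \<le> 0" using False
          by (intro mult_nonneg_nonpos) simp_all
        ultimately show "\<not> inner x w < c" by simp
      qed
      then have "emeasure \<mu> {x. inner x w < c} = 0" by (rule AE_null[OF S1 spU])
      then show False using A1 by simp
    qed
  qed
  show ?thesis using Tpos geo \<gamma>0 noext by blast
qed


theorem lemma3p4:
  fixes \<mu> :: "('a::{real_inner, complete_space, second_countable_topology}) measure"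
    and p :: real
  assumes dim2: "\<exists>u v::'a. u \<noteq> v \<and> independent {u, v}"
    and p: "1 < p"
    and mu: "\<mu> \<in> wasserstein_space p"
  shows "(\<exists>x. \<mu> = return borel x) \<longleftrightarrow>
         (\<forall>T \<gamma>. T > 0 \<and> wgeodesic p {0..T} \<gamma> \<and> \<gamma> 0 = \<mu> \<longrightarrow>
            (\<exists>\<gamma>'. wgeodesic p {0..} \<gamma>' \<and> (\<forall>t\<in>{0..T}. \<gamma>' t = \<gamma> t)))"
proof
  assume "\<exists>x. \<mu> = return borel x"
  then obtain x where x: "\<mu> = return borel x" by blast
  show "\<forall>T \<gamma>. T > 0 \<and> wgeodesic p {0..T} \<gamma> \<and> \<gamma> 0 = \<mu> \<longrightarrow>
            (\<exists>\<gamma>'. wgeodesic p {0..} \<gamma>' \<and> (\<forall>t\<in>{0..T}. \<gamma>' t = \<gamma> t))"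
  proof (intro allI impI)
    fix T and \<gamma> :: "real \<Rightarrow> 'a measure"
    assume a: "T > 0 \<and> wgeodesic p {0..T} \<gamma> \<and> \<gamma> 0 = \<mu>"
    show "\<exists>\<gamma>'. wgeodesic p {0..} \<gamma>' \<and> (\<forall>t\<in>{0..T}. \<gamma>' t = \<gamma> t)"
      using a x by (intro forward[OF p]) auto
  qed
next
  assume H: "\<forall>T \<gamma>. T > 0 \<and> wgeodesic p {0..T} \<gamma> \<and> \<gamma> 0 = \<mu> \<longrightarrow>
            (\<exists>\<gamma>'. wgeodesic p {0..} \<gamma>' \<and> (\<forall>t\<in>{0..T}. \<gamma>' t = \<gamma> t))"
  show "\<exists>x. \<mu> = return borel x"
  proof (rule ccontr)
    assume nd: "\<not> (\<exists>x. \<mu> = return borel x)"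
    obtain T and \<gamma> :: "real \<Rightarrow> 'a measure" where "T > 0" "wgeodesic p {0..T} \<gamma>" "\<gamma> 0 = \<mu>"
      and ne: "\<not> (\<exists>\<gamma>'. wgeodesic p {0..} \<gamma>' \<and> (\<forall>t\<in>{0..T}. \<gamma>' t = \<gamma> t))"
      using backward[OF p mu nd] by blast
    then show False using H by blast
  qed
qed

end
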